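(* Consider a system in general triangular form (GTF) with states $z^1,\dots,z^n$, drift vector field \[ a = \sum_{i=1}^{k_1-1} z^{i+1}\partial_{z^i} + \sum_{i=k_1+1}^{k_1+k_2-1} z^{i+1}\partial_{z^i} + \sum_{l=k_1+k_2}^{n-1} a^l\,\partial_{z^l}, \] and input vector fields $b_1 = \partial_{z^{k_1}} + \sum_{l=k_1+k_2}^{n-1} b^l\,\partial_{z^l}$, $b_2 = \partial_{z^n}$. Define $D_0=0$, $D_1 = \mathrm{span}\{b_1,b_2\}$ and $D_{i+1} = D_i + [a,D_i]$ for $i=1,\dots,p$, and assume that $D_1,\dots,D_p$ are involutive and $D_{p+1}$ is non-involutive. Assume further that $D_{p-1}\subset D_p\subset D_{p+1}$ with corank $2$ at each inclusion, that $D_p\not\subset \mathcal{C}(D_{p+1})$, that $[a,D_{p-1}]\subset D_p$ and $D_{p+1} = D_p + [a,D_p]$. Then $v_c := \partial_{z^{n-(p-1)}}$ is a valid choice of the vector field $v_c$ in the following sense: with $v_1 = \mathrm{ad}_a^{p-1} b_1$ and $v_2 = \partial_{z^{n-(p-1)}}$ one has $D_p = D_{p-1} + \mathrm{span}\{v_1,v_2\}$, and $(\alpha^1,\alpha^2) = (0,1)$ is a nontrivial solution of \[ (\alpha^1)^2[v_1,[v_1,a]] + 2\alpha^1\alpha^2[v_1,[v_2,a]] + (\alpha^2)^2[v_2,[v_2,a]] \in D_{p+1}, \] so that $v_c = \alpha^1 v_1 + \alpha^2 v_2 = \partial_{z^{n-(p-1)}}$ is a candidate vector field $v_c\in D_p$,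 $v_c\notin D_{p-1}$, for which $H_1 = D_{p-1}+\mathrm{span}\{v_c\}$ and $H_2 = D_p + \mathrm{span}\{[a,v_c]\}$ could satisfy $H_1\subset\mathcal{C}(H_2)$.
   Context: The general triangular form (GTF) with integers $k_1,k_2\ge1$, $k_1+k_2\le n$, states $z^1,\dots,z^n$ and inputs $v^1,v^2$ is $\dot z = a(z) + b_1(z)v^1 + b_2(z)v^2$ with $a,b_1,b_2$ as in the claim, i.e. $\dot z^i = z^{i+1}$ ($i=1,\dots,k_1-1$), $\dot z^{k_1}=v^1$, $\dot z^i = z^{i+1}$ ($i=k_1+1,\dots,k_1+k_2-1$), $\dot z^l = a^l(z^1,\dots,z^{l+1}) + b^l(z^1,\dots,z^{l+1})v^1$ ($l=k_1+k_2,\dots,n-1$), $\dot z^n = v^2$, where $b^{k_1+k_2}\neq0$ and for each $l$, $\partial_{z^{l+1}}a^l\ne0$ or $\partial_{z^{l+1}}b^l\ne0$. All objects are smooth, distributions have locally constant rank, statements are local at generic points. $[v,w]$ is the Lie bracket; $\mathrm{ad}_a b = [a,b]$, $\mathrm{ad}_a^{i} b = [a,\mathrm{ad}_a^{i-1}b]$, $\mathrm{ad}_a^0 b = b$; for distributions, $[D_1,D_2]$ is the span of brackets of their basis vector fields and $[v,D]$ the span of brackets of $v$ with basis fields of $D$. The Cauchy characteristic distribution $\mathcal{C}(D)$ is spanned by all $v\in D$ with $[v,D]\subset D$. "Corank $2$" for $D\subset D'$ means $\dim D' - \dim D = 2$. *)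

theory Defs
  imports "HOL-Analysis.Analysis"
begin

text \<open>Points of R^n are modelled as functions nat => real; only the coordinates 1..n matter.
 Vector fields map a point to a vector (nat => real), components 1..n.\<close>

type_synonym pt = "nat \<Rightarrow> real"
type_synonym vfield = "pt \<Rightarrow> nat \<Rightarrow> real"

definition open_n :: "nat \<Rightarrow> pt set \<Rightarrow> bool" where
  "open_n n U \<longleftrightarrow> (\<forall>z\<in>U. \<exists>e>0. \<forall>w. (\<forall>j\<in>{1..n}. \<bar>w j - z j\<bar> < e) \<longrightarrow> w \<in> U)"

definition cont_n :: "nat \<Rightarrow> pt set \<Rightarrow> (pt \<Rightarrow> real) \<Rightarrow> bool" where
  "cont_n n U f \<longleftrightarrow> (\<forall>z\<in>U. \<forall>\<epsilon>>0. \<exists>\<delta>>0. \<forall>w\<in>U.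
      (\<forall>j\<in>{1..n}. \<bar>w j - z j\<bar> < \<delta>) \<longrightarrow> \<bar>f w - f z\<bar> < \<epsilon>)"

definition dpart :: "nat \<Rightarrow> (pt \<Rightarrow> real) \<Rightarrow> pt \<Rightarrow> real" where
  "dpart i f z = deriv (\<lambda>t. f (z(i := t))) (z i)"

fun ipart :: "nat list \<Rightarrow> (pt \<Rightarrow> real) \<Rightarrow> pt \<Rightarrow> real" where
  "ipart [] f = f"
| "ipart (i # is) f = dpart i (ipart is f)"

definition smooth_on :: "nat \<Rightarrow> pt set \<Rightarrow> (pt \<Rightarrow> real) \<Rightarrow> bool" where
  "smooth_on n U f \<longleftrightarrow> (\<forall>is. set is \<subseteq> {1..n} \<longrightarrow>
      cont_n n U (ipart is f) \<and>
      (\<forall>i\<in>{1..n}. \<forall>z\<in>U. (\<lambda>t. ipart is f (z(i := t))) differentiable (at (z i))))"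

definition smooth_vf :: "nat \<Rightarrow> pt set \<Rightarrow> vfield \<Rightarrow> bool" where
  "smooth_vf n U v \<longleftrightarrow> (\<forall>j\<in>{1..n}. smooth_on n U (\<lambda>z. v z j))"

definition lie :: "nat \<Rightarrow> vfield \<Rightarrow> vfield \<Rightarrow> vfield" where
  "lie n v w = (\<lambda>z j. \<Sum>i=1..n. v z i * dpart i (\<lambda>y. w y j) z - w z i * dpart i (\<lambda>y. v y j) z)"

fun ad_pow :: "nat \<Rightarrow> vfield \<Rightarrow> nat \<Rightarrow> vfield \<Rightarrow> vfield" where
  "ad_pow n a 0 b = b"
| "ad_pow n a (Suc i) b = lie n a (ad_pow n a i b)"

definition coord_vf :: "nat \<Rightarrow> vfield" where
  "coord_vf i = (\<lambda>z j. if j = i then 1 else 0)"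

definition in_span :: "nat \<Rightarrow> (nat \<Rightarrow> real) list \<Rightarrow> (nat \<Rightarrow> real) \<Rightarrow> bool" where
  "in_span n vs x \<longleftrightarrow> (\<exists>c. \<forall>j\<in>{1..n}. x j = (\<Sum>k<length vs. c k * (vs ! k) j))"

definition lin_indep :: "nat \<Rightarrow> (nat \<Rightarrow> real) list \<Rightarrow> nat set \<Rightarrow> bool" where
  "lin_indep n vs I \<longleftrightarrow> (\<forall>c. (\<forall>j\<in>{1..n}. (\<Sum>k\<in>I. c k * (vs ! k) j) = 0) \<longrightarrow> (\<forall>k\<in>I. c k = 0))"

definition rank_n :: "nat \<Rightarrow> (nat \<Rightarrow> real) list \<Rightarrow> nat" where
  "rank_n n vs = Max {card I | I. I \<subseteq> {..<length vs} \<and> lin_indep n vs I}"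

text \<open>A distribution is given by a list of generating vector fields; its value at z.\<close>
definition dval :: "vfield list \<Rightarrow> pt \<Rightarrow> (nat \<Rightarrow> real) list" where
  "dval gs z = map (\<lambda>g. g z) gs"

definition in_distr :: "nat \<Rightarrow> pt set \<Rightarrow> vfield list \<Rightarrow> vfield \<Rightarrow> bool" where
  "in_distr n U gs v \<longleftrightarrow> (\<forall>z\<in>U. in_span n (dval gs z) (v z))"

definition involutive_at :: "nat \<Rightarrow> vfield list \<Rightarrow> pt \<Rightarrow> bool" where
  "involutive_at n gs z \<longleftrightarrow> (\<forall>v\<in>set gs. \<forall>w\<in>set gs. in_span n (dval gs z) (lie n v w z))"

definition cauchy_char :: "nat \<Rightarrow> pt set \<Rightarrow> vfield list \<Rightarrow> vfield set" where
  "cauchy_char n U gs = {v. smooth_vf n U v \<and> in_distr n U gs v \<and>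
      (\<forall>w. smooth_vf n U w \<and> in_distr n U gs w \<longrightarrow> in_distr n U gs (lie n v w))}"

fun Dseq :: "nat \<Rightarrow> vfield \<Rightarrow> vfield \<Rightarrow> vfield \<Rightarrow> nat \<Rightarrow> vfield list" where
  "Dseq n a b1 b2 0 = []"
| "Dseq n a b1 b2 (Suc i) =
     (if i = 0 then [b1, b2] else Dseq n a b1 b2 i @ map (lie n a) (Dseq n a b1 b2 i))"

definition gtf_a :: "nat \<Rightarrow> nat \<Rightarrow> nat \<Rightarrow> (nat \<Rightarrow> pt \<Rightarrow> real) \<Rightarrow> vfield" where
  "gtf_a n k1 k2 al = (\<lambda>z j.
      if 1 \<le> j \<and> j < k1 then z (j + 1)
      else if k1 < j \<and> j < k1 + k2 then z (j + 1)
      else if k1 + k2 \<le> j \<and> j \<le> n - 1 then al j z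
      else 0)"

definition gtf_b1 :: "nat \<Rightarrow> nat \<Rightarrow> nat \<Rightarrow> (nat \<Rightarrow> pt \<Rightarrow> real) \<Rightarrow> vfield" where
  "gtf_b1 n k1 k2 bl = (\<lambda>z j.
      if j = k1 then 1
      else if k1 + k2 \<le> j \<and> j \<le> n - 1 then bl j z
      else 0)"

definition gtf_b2 :: "nat \<Rightarrow> vfield" where
  "gtf_b2 n = coord_vf n"

definition quad_expr :: "nat \<Rightarrow> vfield \<Rightarrow> vfield \<Rightarrow> vfield \<Rightarrow> real \<Rightarrow> real \<Rightarrow> vfield" where
  "quad_expr n a v1 v2 \<alpha>1 \<alpha>2 = (\<lambda>z j.
      \<alpha>1\<^sup>2 * lie n v1 (lie n v1 a) z j + 2 * \<alpha>1 * \<alpha>2 * lie n v1 (lie n v2 a) z j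
      + \<alpha>2\<^sup>2 * lie n v2 (lie n v2 a) z j)"

end

theory Submission
  imports Defs "HOL-Library.Function_Algebras"
begin


section \<open>Linear algebra on coordinates 1..n\<close>

definition prj :: "nat \<Rightarrow> (nat \<Rightarrow> real) \<Rightarrow> (nat \<Rightarrow> real)" where
  "prj n v = (\<lambda>j. if j \<in> {1..n} then v j else 0)"

definition scl :: "real \<Rightarrow> (nat \<Rightarrow> real) \<Rightarrow> (nat \<Rightarrow> real)" where
  "scl c v = (\<lambda>j. c * v j)"

interpretation fv: vector_space scl
  by unfold_locales (auto simp: scl_def fun_eq_iff algebra_simps)

definition ispan :: "nat \<Rightarrow> (nat \<Rightarrow> nat \<Rightarrow> real) \<Rightarrow> nat set \<Rightarrow> (nat \<Rightarrow> real) \<Rightarrow> bool" where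
  "ispan n F I x \<longleftrightarrow> (\<exists>c. \<forall>j\<in>{1..n}. x j = (\<Sum>k\<in>I. c k * F k j))"

definition iindep :: "nat \<Rightarrow> (nat \<Rightarrow> nat \<Rightarrow> real) \<Rightarrow> nat set \<Rightarrow> bool" where
  "iindep n F I \<longleftrightarrow> (\<forall>c. (\<forall>j\<in>{1..n}. (\<Sum>k\<in>I. c k * F k j) = 0) \<longrightarrow> (\<forall>k\<in>I. c k = 0))"

definition rankI :: "nat \<Rightarrow> (nat \<Rightarrow> nat \<Rightarrow> real) \<Rightarrow> nat set \<Rightarrow> nat" where
  "rankI n F A = Max {card I | I. I \<subseteq> A \<and> iindep n F I}"

lemma in_span_ispan: "in_span n vs x \<longleftrightarrow> ispan n (nth vs) {..<length vs} x"
  by (simp add: in_span_def ispan_def atLeast0LessThan)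

lemma lin_indep_iindep: "lin_indep n vs I \<longleftrightarrow> iindep n (nth vs) I"
  by (simp add: lin_indep_def iindep_def)

lemma rank_n_rankI: "rank_n n vs = rankI n (nth vs) {..<length vs}"
  by (simp add: rank_n_def rankI_def lin_indep_iindep)

lemma ispan_trans:
  assumes "ispan n F I x" "\<forall>k\<in>I. ispan n G J (F k)" "finite I" "finite J"
  shows "ispan n G J x"
proof -
  obtain c where c: "\<forall>j\<in>{1..n}. x j = (\<Sum>k\<in>I. c k * F k j)" using assms(1) ispan_def by blast
  have "\<forall>k\<in>I. \<exists>d. \<forall>j\<in>{1..n}. F k j = (\<Sum>m\<in>J. d m * G m j)" using assms(2) ispan_def by blast
  then obtain d where d: "\<forall>k\<in>I. \<forall>j\<in>{1..n}. F k j = (\<Sum>m\<in>J. d k m * G m j)" by metis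
  have "\<forall>j\<in>{1..n}. x j = (\<Sum>m\<in>J. (\<Sum>k\<in>I. c k * d k m) * G m j)"
  proof
    fix j assume j: "j \<in> {1..n}"
    have "x j = (\<Sum>k\<in>I. c k * (\<Sum>m\<in>J. d k m * G m j))" using c d j by simp
    also have "\<dots> = (\<Sum>k\<in>I. \<Sum>m\<in>J. c k * d k m * G m j)"
      by (simp add: sum_distrib_left mult.assoc)
    also have "\<dots> = (\<Sum>m\<in>J. \<Sum>k\<in>I. c k * d k m * G m j)" by (rule sum.swap)
    also have "\<dots> = (\<Sum>m\<in>J. (\<Sum>k\<in>I. c k * d k m) * G m j)"
      by (simp add: sum_distrib_right)
    finally show "x j = (\<Sum>m\<in>J. (\<Sum>k\<in>I. c k * d k m) * G m j)" .
  qed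
  then show ?thesis unfolding ispan_def by (rule exI[of _ "\<lambda>m. \<Sum>k\<in>I. c k * d k m"])
qed

lemma ispan_mem: "finite I \<Longrightarrow> k \<in> I \<Longrightarrow> ispan n F I (F k)"
  unfolding ispan_def
proof (rule exI[of _ "\<lambda>m. if m = k then 1 else 0"], intro ballI)
  fix j assume "finite I" "k \<in> I"
  have "(\<Sum>m\<in>I. (if m = k then 1 else 0) * F m j) = (\<Sum>m\<in>I. if m = k then F m j else 0)"
    by (rule sum.cong) auto
  also have "\<dots> = F k j" using \<open>finite I\<close> \<open>k \<in> I\<close> by simp
  finally show "F k j = (\<Sum>m\<in>I. (if m = k then 1 else 0) * F m j)" by simp
qed

lemma ispan_cong: "(\<forall>j\<in>{1..n}. x j = y j) \<Longrightarrow> ispan n F I x = ispan n F I y"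
  unfolding ispan_def by auto

lemma ispan_zero: "(\<forall>j\<in>{1..n}. x j = 0) \<Longrightarrow> ispan n F I x"
  unfolding ispan_def by (rule exI[of _ "\<lambda>_. 0"]) simp

lemma ispan_add:
  assumes "ispan n F I x" "ispan n F I y"
  shows "ispan n F I (\<lambda>j. x j + y j)"
proof -
  obtain c where c: "\<forall>j\<in>{1..n}. x j = (\<Sum>k\<in>I. c k * F k j)" using assms(1) ispan_def by blast
  obtain d where d: "\<forall>j\<in>{1..n}. y j = (\<Sum>k\<in>I. d k * F k j)" using assms(2) ispan_def by blast
  show ?thesis unfolding ispan_def
    by (rule exI[of _ "\<lambda>k. c k + d k"]) (simp add: c d distrib_right sum.distrib)
qed

lemma ispan_scale:
  assumes "ispan n F I x"
  shows "ispan n F I (\<lambda>j. r * x j)"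
proof -
  obtain c where c: "\<forall>j\<in>{1..n}. x j = (\<Sum>k\<in>I. c k * F k j)" using assms(1) ispan_def by blast
  show ?thesis unfolding ispan_def
    by (rule exI[of _ "\<lambda>k. r * c k"]) (simp add: c sum_distrib_left mult.assoc)
qed

lemma ispan_sum:
  assumes "finite S" "\<forall>s\<in>S. ispan n F I (x s)"
  shows "ispan n F I (\<lambda>j. \<Sum>s\<in>S. x s j)"
  using assms
proof (induction S rule: finite_induct)
  case empty then show ?case by (simp add: ispan_zero)
next
  case (insert s S)
  then show ?case using ispan_add[of n F I "x s" "\<lambda>j. \<Sum>s\<in>S. x s j"] by simp
qed

lemma iindep_subset: "iindep n F I \<Longrightarrow> J \<subseteq> I \<Longrightarrow> finite I \<Longrightarrow> iindep n F J"
  unfolding iindep_def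
proof (intro allI impI ballI)
  fix c k
  assume H: "\<forall>c. (\<forall>j\<in>{1..n}. (\<Sum>k\<in>I. c k * F k j) = 0) \<longrightarrow> (\<forall>k\<in>I. c k = 0)"
    and JI: "J \<subseteq> I" and fI: "finite I" and s: "\<forall>j\<in>{1..n}. (\<Sum>k\<in>J. c k * F k j) = 0" and k: "k \<in> J"
  let ?c = "\<lambda>k. if k \<in> J then c k else 0"
  have "\<forall>j\<in>{1..n}. (\<Sum>k\<in>I. ?c k * F k j) = 0"
  proof
    fix j assume "j \<in> {1..n}"
    have "(\<Sum>k\<in>I. ?c k * F k j) = (\<Sum>k\<in>I. if k \<in> J then c k * F k j else 0)"
      by (rule sum.cong) auto
    also have "\<dots> = (\<Sum>k\<in>I \<inter> J. c k * F k j)" using fI by (rule sum.inter_restrict[symmetric])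
    also have "I \<inter> J = J" using JI by blast
    finally have "(\<Sum>k\<in>I. ?c k * F k j) = (\<Sum>k\<in>J. c k * F k j)" .
    then show "(\<Sum>k\<in>I. ?c k * F k j) = 0" using s \<open>j \<in> {1..n}\<close> by simp
  qed
  then have "\<forall>k\<in>I. ?c k = 0" using H[rule_format, of ?c] by blast
  then have "(if k \<in> J then c k else 0) = 0" using k JI by blast
  then show "c k = 0" using k by simp
qed

lemma iindep_insert:
  assumes ind: "iindep n F I" and fI: "finite I" and iI: "i \<notin> I" and ns: "\<not> ispan n F I (F i)"
  shows "iindep n F (insert i I)"
  unfolding iindep_def
proof (intro allI impI)
  fix c assume s: "\<forall>j\<in>{1..n}. (\<Sum>k\<in>insert i I. c k * F k j) = 0"
  have ci: "c i = 0"
  proof (rule ccontr)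
    assume "c i \<noteq> 0"
    have "\<forall>j\<in>{1..n}. F i j = (\<Sum>k\<in>I. (- c k / c i) * F k j)"
    proof
      fix j assume j: "j \<in> {1..n}"
      have "c i * F i j + (\<Sum>k\<in>I. c k * F k j) = 0" using s j fI iI by simp
      then have "F i j = - (\<Sum>k\<in>I. c k * F k j) / c i" using \<open>c i \<noteq> 0\<close>
        by (simp add: field_simps)
      also have "\<dots> = (\<Sum>k\<in>I. (- c k / c i) * F k j)"
        by (simp add: sum_divide_distrib sum_negf[symmetric])
      finally show "F i j = (\<Sum>k\<in>I. (- c k / c i) * F k j)" .
    qed
    then have "ispan n F I (F i)" unfolding ispan_def by (rule exI[of _ "\<lambda>k. - c k / c i"])
    with ns show False by blast
  qed
  have "\<forall>j\<in>{1..n}. (\<Sum>k\<in>I. c k * F k j) = 0" using s ci fI iI by simp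
  then have "\<forall>k\<in>I. c k = 0" using ind iindep_def by blast
  then show "\<forall>k\<in>insert i I. c k = 0" using ci by simp
qed

lemma iindep_empty: "iindep n F {}"
  by (simp add: iindep_def)

lemma rankI_set_finite: "finite A \<Longrightarrow> finite {card I | I. I \<subseteq> A \<and> iindep n F I}"
  by (rule finite_subset[of _ "card ` Pow A"]) auto

lemma rankI_ex:
  assumes "finite A"
  shows "\<exists>I. I \<subseteq> A \<and> iindep n F I \<and> card I = rankI n F A"
proof -
  have "rankI n F A \<in> {card I | I. I \<subseteq> A \<and> iindep n F I}"
    unfolding rankI_def
    apply (rule Max_in[OF rankI_set_finite[OF assms]])
    using iindep_empty by blast
  then show ?thesis by auto
qed

lemma rankI_ge:
  assumes "finite A" "I \<subseteq> A" "iindep n F I"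
  shows "card I \<le> rankI n F A"
  unfolding rankI_def
  apply (rule Max_ge[OF rankI_set_finite[OF assms(1)]])
  using assms by blast

lemma maximal_spans:
  assumes fA: "finite A" and IA: "I \<subseteq> A" and ind: "iindep n F I" and cI: "card I = rankI n F A"
    and k: "k \<in> A"
  shows "ispan n F I (F k)"
proof (rule ccontr)
  assume ns: "\<not> ispan n F I (F k)"
  have fI: "finite I" using fA IA finite_subset by blast
  have kI: "k \<notin> I" using ispan_mem[OF fI] ns by blast
  have "iindep n F (insert k I)" by (rule iindep_insert[OF ind fI kI ns])
  then have "card (insert k I) \<le> rankI n F A" using rankI_ge[OF fA] IA k by blast
  then show False using cI kI fI by simp
qed

lemma ispan_to_span:
  assumes "ispan n F I x" "finite I"
  shows "prj n x \<in> fv.span ((\<lambda>k. prj n (F k)) ` I)"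
proof -
  obtain c where c: "\<forall>j\<in>{1..n}. x j = (\<Sum>k\<in>I. c k * F k j)" using assms(1) ispan_def by blast
  have eq: "prj n x = (\<Sum>k\<in>I. scl (c k) (prj n (F k)))"
  proof
    fix j
    have "(\<Sum>k\<in>I. scl (c k) (prj n (F k))) j = (\<Sum>k\<in>I. scl (c k) (prj n (F k)) j)"
      by (induction I rule: infinite_finite_induct) auto
    then show "prj n x j = (\<Sum>k\<in>I. scl (c k) (prj n (F k))) j"
      using c by (auto simp: prj_def scl_def)
  qed
  show ?thesis unfolding eq
    by (intro fv.span_sum fv.span_scale fv.span_base) auto
qed

lemma sum_fun_apply: "(\<Sum>k\<in>I. (f k :: nat \<Rightarrow> real)) j = (\<Sum>k\<in>I. f k j)"
  by (induction I rule: infinite_finite_induct) auto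

lemma iindep_to_indep:
  assumes ind: "iindep n F I" and fI: "finite I"
  shows "inj_on (\<lambda>k. prj n (F k)) I \<and> fv.independent ((\<lambda>k. prj n (F k)) ` I)"
proof
  show inj: "inj_on (\<lambda>k. prj n (F k)) I"
  proof (rule inj_onI, rule ccontr)
    fix k1 k2 assume k1: "k1 \<in> I" and k2: "k2 \<in> I" and eq: "prj n (F k1) = prj n (F k2)" and ne: "k1 \<noteq> k2"
    let ?c = "\<lambda>k. if k = k1 then 1 else if k = k2 then -1 else (0::real)"
    have "\<forall>j\<in>{1..n}. (\<Sum>k\<in>I. ?c k * F k j) = 0"
    proof
      fix j assume j: "j \<in> {1..n}"
      have "F k1 j = F k2 j" using eq j unfolding prj_def by (metis)
      have "(\<Sum>k\<in>I. ?c k * F k j) = (\<Sum>k\<in>{k1,k2}. ?c k * F k j)"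
        by (rule sum.mono_neutral_right) (use fI k1 k2 in auto)
      also have "\<dots> = 0" using ne \<open>F k1 j = F k2 j\<close> by simp
      finally show "(\<Sum>k\<in>I. ?c k * F k j) = 0" .
    qed
    moreover have "(\<forall>j\<in>{1..n}. (\<Sum>k\<in>I. ?c k * F k j) = 0) \<longrightarrow> (\<forall>k\<in>I. ?c k = 0)"
      using ind unfolding iindep_def by (rule spec)
    ultimately have "\<forall>k\<in>I. ?c k = 0" by blast
    then have "?c k1 = 0" using k1 by blast
    then show False by simp
  qed
  show "fv.independent ((\<lambda>k. prj n (F k)) ` I)"
  proof (rule fv.independent_if_scalars_zero)
    show "finite ((\<lambda>k. prj n (F k)) ` I)" using fI by simp
  next
    fix f x assume s: "(\<Sum>x\<in>(\<lambda>k. prj n (F k)) ` I. scl (f x) x) = 0" and x: "x \<in> (\<lambda>k. prj n (F k)) ` I"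
    let ?c = "\<lambda>k. f (prj n (F k))"
    have "\<forall>j\<in>{1..n}. (\<Sum>k\<in>I. ?c k * F k j) = 0"
    proof
      fix j assume j: "j \<in> {1..n}"
      have "(\<Sum>x\<in>(\<lambda>k. prj n (F k)) ` I. scl (f x) x) = (\<Sum>k\<in>I. scl (?c k) (prj n (F k)))"
        by (simp add: sum.reindex[OF inj])
      then have "(\<Sum>k\<in>I. scl (?c k) (prj n (F k))) j = 0" using s by simp
      then show "(\<Sum>k\<in>I. ?c k * F k j) = 0" using j by (simp add: sum_fun_apply scl_def prj_def)
    qed
    moreover have "(\<forall>j\<in>{1..n}. (\<Sum>k\<in>I. ?c k * F k j) = 0) \<longrightarrow> (\<forall>k\<in>I. ?c k = 0)"
      using ind unfolding iindep_def by (rule spec)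
    ultimately have "\<forall>k\<in>I. ?c k = 0" by blast
    then show "f x = 0" using x by auto
  qed
qed

lemma steinitz:
  assumes fI: "finite I" and fJ: "finite J" and ind: "iindep n F I"
    and sp: "\<forall>k\<in>I. ispan n G J (F k)"
  shows "card I \<le> card J"
proof -
  have ii: "inj_on (\<lambda>k. prj n (F k)) I" and id: "fv.independent ((\<lambda>k. prj n (F k)) ` I)"
    using iindep_to_indep[OF ind fI] by auto
  have "(\<lambda>k. prj n (F k)) ` I \<subseteq> fv.span ((\<lambda>k. prj n (G k)) ` J)"
    using ispan_to_span[OF _ fJ] sp by blast
  then have "finite ((\<lambda>k. prj n (F k)) ` I) \<and> card ((\<lambda>k. prj n (F k)) ` I) \<le> card ((\<lambda>k. prj n (G k)) ` J)"
    by (rule fv.independent_span_bound[OF finite_imageI[OF fJ] id])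
  then have "card ((\<lambda>k. prj n (F k)) ` I) \<le> card ((\<lambda>k. prj n (G k)) ` J)" by (rule conjunct2)
  also have "\<dots> \<le> card J" using fJ by (rule card_image_le)
  finally show ?thesis unfolding card_image[OF ii] .
qed

lemma rankI_mono_span:
  assumes fA: "finite A" and fB: "finite B" and sp: "\<forall>k\<in>A. ispan n G B (F k)"
  shows "rankI n F A \<le> rankI n G B"
proof -
  obtain I where I: "I \<subseteq> A" "iindep n F I" "card I = rankI n F A" using rankI_ex[OF fA] by blast
  obtain J where J: "J \<subseteq> B" "iindep n G J" "card J = rankI n G B" using rankI_ex[OF fB] by blast
  have fI: "finite I" using fA I(1) finite_subset by blast
  have fJ: "finite J" using fB J(1) finite_subset by blast
  have "\<forall>m\<in>B. ispan n G J (G m)" using maximal_spans[OF fB J(1) J(2) J(3)] by blast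
  then have "\<forall>k\<in>I. ispan n G J (F k)" using sp I(1) ispan_trans[OF _ _ fB fJ] by blast
  then have "card I \<le> card J" using steinitz[OF fI fJ I(2)] by blast
  then show ?thesis using I J by simp
qed

lemma rankI_insert:
  assumes fA: "finite A"
  shows "rankI n F (insert i A) \<le> rankI n F A + 1"
proof -
  obtain I where I: "I \<subseteq> insert i A" "iindep n F I" "card I = rankI n F (insert i A)"
    using rankI_ex[of "insert i A"] fA by blast
  have fI: "finite I" using fA I(1) finite_subset by blast
  have "iindep n F (I - {i})" using iindep_subset[OF I(2) _ fI] by blast
  moreover have "I - {i} \<subseteq> A" using I(1) by blast
  ultimately have "card (I - {i}) \<le> rankI n F A" using rankI_ge[OF fA] by blast
  moreover have "card I \<le> card (I - {i}) + 1"
  proof (cases "i \<in> I")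
    case True then show ?thesis using card.remove[OF fI True] by simp
  next
    case False then show ?thesis by simp
  qed
  ultimately show ?thesis using I(3) by linarith
qed

lemma rankI_cong: "(\<forall>k\<in>A. F k = G k) \<Longrightarrow> rankI n F A = rankI n G A"
proof -
  assume H: "\<forall>k\<in>A. F k = G k"
  have "\<And>I. I \<subseteq> A \<Longrightarrow> iindep n F I = iindep n G I"
  proof -
    fix I assume "I \<subseteq> A"
    then have "\<And>c j. (\<Sum>k\<in>I. c k * F k j) = (\<Sum>k\<in>I. c k * G k j)" using H by (intro sum.cong) auto
    then show "iindep n F I = iindep n G I" unfolding iindep_def by simp
  qed
  then have "{card I | I. I \<subseteq> A \<and> iindep n F I} = {card I | I. I \<subseteq> A \<and> iindep n G I}" by blast
  then show ?thesis unfolding rankI_def by simp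
qed

lemma ispan_cong_F: "(\<forall>k\<in>I. F k = G k) \<Longrightarrow> ispan n F I x = ispan n G I x"
proof -
  assume H: "\<forall>k\<in>I. F k = G k"
  then have "\<And>c j. (\<Sum>k\<in>I. c k * F k j) = (\<Sum>k\<in>I. c k * G k j)" by (intro sum.cong) auto
  then show ?thesis unfolding ispan_def by simp
qed

lemma in_span_mem: "v \<in> set L \<Longrightarrow> in_span n L v"
  unfolding in_span_ispan by (metis finite_lessThan in_set_conv_nth ispan_mem lessThan_iff)

lemma in_span_trans: "in_span n L x \<Longrightarrow> \<forall>v\<in>set L. in_span n M v \<Longrightarrow> in_span n M x"
  unfolding in_span_ispan
  by (rule ispan_trans[of n "nth L" "{..<length L}" x "nth M" "{..<length M}"]) (use nth_mem in \<open>auto simp: in_span_ispan[symmetric]\<close>)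

lemma in_span_add: "in_span n L x \<Longrightarrow> in_span n L y \<Longrightarrow> in_span n L (\<lambda>j. x j + y j)"
  unfolding in_span_ispan by (rule ispan_add)

lemma in_span_scale: "in_span n L x \<Longrightarrow> in_span n L (\<lambda>j. r * x j)"
  unfolding in_span_ispan by (rule ispan_scale)

lemma in_span_zero: "(\<forall>j\<in>{1..n}. x j = 0) \<Longrightarrow> in_span n L x"
  unfolding in_span_ispan by (rule ispan_zero)

lemma in_span_cong: "(\<forall>j\<in>{1..n}. x j = y j) \<Longrightarrow> in_span n L x = in_span n L y"
  unfolding in_span_ispan by (rule ispan_cong)

lemma in_span_sum: "finite S \<Longrightarrow> \<forall>s\<in>S. in_span n L (x s) \<Longrightarrow> in_span n L (\<lambda>j. \<Sum>s\<in>S. x s j)"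
  unfolding in_span_ispan by (rule ispan_sum)

lemma rank_mono_span: "\<forall>v\<in>set L. in_span n M v \<Longrightarrow> rank_n n L \<le> rank_n n M"
  unfolding rank_n_rankI
  by (rule rankI_mono_span) (auto simp: in_span_ispan[symmetric])

lemma rank_snoc: "rank_n n (L @ [x]) \<le> rank_n n L + 1"
proof -
  have "rank_n n (L @ [x]) = rankI n (nth (L @ [x])) (insert (length L) {..<length L})"
    unfolding rank_n_rankI by (simp add: lessThan_Suc)
  also have "\<dots> \<le> rankI n (nth (L @ [x])) {..<length L} + 1" by (rule rankI_insert) simp
  also have "rankI n (nth (L @ [x])) {..<length L} = rank_n n L"
    unfolding rank_n_rankI by (rule rankI_cong) (simp add: nth_append)
  finally show ?thesis .
qed

lemma in_span_mono: "set L \<subseteq> set M \<Longrightarrow> in_span n L x \<Longrightarrow> in_span n M x"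
  using in_span_trans in_span_mem by blast



section \<open>Calculus along coordinate lines\<close>

definition cube :: "nat \<Rightarrow> pt \<Rightarrow> real \<Rightarrow> pt set" where
  "cube n z d = {w. \<forall>j\<in>{1..n}. \<bar>w j - z j\<bar> < d}"

definition pd :: "nat \<Rightarrow> (pt \<Rightarrow> real) \<Rightarrow> pt \<Rightarrow> bool" where
  "pd i f z \<longleftrightarrow> (\<lambda>t. f (z(i := t))) differentiable (at (z i))"

lemma pd_DERIV: "pd i f z \<Longrightarrow> ((\<lambda>t. f (z(i := t))) has_real_derivative dpart i f z) (at (z i))"
  unfolding pd_def dpart_def using DERIV_deriv_iff_real_differentiable by blast

lemma DERIV_dpart:
  assumes "((\<lambda>t. f (z(i := t))) has_real_derivative D) (at (z i))"
  shows "dpart i f z = D" "pd i f z"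
  using assms unfolding dpart_def pd_def
  by (auto intro: DERIV_imp_deriv simp: real_differentiable_def)

lemma cube_center: "d > 0 \<Longrightarrow> z \<in> cube n z d"
  by (simp add: cube_def)

lemma cube_mono: "d' \<le> d \<Longrightarrow> cube n z d' \<subseteq> cube n z d"
  by (auto simp: cube_def)

lemma open_n_cube: "open_n n U \<Longrightarrow> z \<in> U \<Longrightarrow> \<exists>d>0. cube n z d \<subseteq> U"
  unfolding open_n_def cube_def by blast

lemma cube_open_n: "open_n n (cube n z d)"
  unfolding open_n_def cube_def
proof (intro ballI)
  fix w assume w: "w \<in> {w. \<forall>j\<in>{1..n}. \<bar>w j - z j\<bar> < d}"
  show "\<exists>e>0. \<forall>v. (\<forall>j\<in>{1..n}. \<bar>v j - w j\<bar> < e) \<longrightarrow> v \<in> {w. \<forall>j\<in>{1..n}. \<bar>w j - z j\<bar> < d}"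
  proof (cases "n = 0")
    case True then show ?thesis by (intro exI[of _ 1]) auto
  next
    case False
    let ?m = "Min ((\<lambda>j. d - \<bar>w j - z j\<bar>) ` {1..n})"
    have fin: "finite ((\<lambda>j. d - \<bar>w j - z j\<bar>) ` {1..n})" by simp
    have ne: "(\<lambda>j. d - \<bar>w j - z j\<bar>) ` {1..n} \<noteq> {}" using False by auto
    have pos: "?m > 0" using w fin ne by (subst Min_gr_iff) auto
    show ?thesis
    proof (intro exI[of _ ?m] conjI allI impI pos)
      fix v assume v: "\<forall>j\<in>{1..n}. \<bar>v j - w j\<bar> < ?m"
      show "v \<in> {w. \<forall>j\<in>{1..n}. \<bar>w j - z j\<bar> < d}"
      proof (unfold mem_Collect_eq, intro ballI)
        fix j assume j: "j \<in> {1..n}"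
        have "?m \<le> d - \<bar>w j - z j\<bar>" using j fin by (intro Min_le) auto
        then show "\<bar>v j - z j\<bar> < d" using v j by force
      qed
    qed
  qed
qed

lemma cube_inside: "w \<in> cube n z d \<Longrightarrow> \<exists>e>0. cube n w e \<subseteq> cube n z d"
  using cube_open_n[of n z d] unfolding open_n_def cube_def by blast

lemma eventually_line_in_cube:
  assumes "d > 0"
  shows "eventually (\<lambda>t. z(i := t) \<in> cube n z d) (nhds (z i))"
proof -
  have "\<forall>t. dist t (z i) < d \<longrightarrow> z(i := t) \<in> cube n z d"
    using assms by (auto simp: cube_def dist_real_def)
  then show ?thesis using assms unfolding eventually_nhds_metric by blast
qed

lemma dpart_local:
  assumes "d > 0" "\<forall>w\<in>cube n z d. f w = g w"
  shows "dpart i f z = dpart i g z" "pd i f z \<longleftrightarrow> pd i g z"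
proof -
  have ev: "eventually (\<lambda>t. f (z(i := t)) = g (z(i := t))) (nhds (z i))"
    using eventually_line_in_cube[OF assms(1), of z i n] assms(2) by (auto elim: eventually_mono)
  show "dpart i f z = dpart i g z" unfolding dpart_def by (rule deriv_cong_ev[OF ev refl])
  have "\<And>D. ((\<lambda>t. f (z(i := t))) has_real_derivative D) (at (z i)) \<longleftrightarrow>
             ((\<lambda>t. g (z(i := t))) has_real_derivative D) (at (z i))"
    by (rule DERIV_cong_ev[OF refl ev refl])
  then show "pd i f z \<longleftrightarrow> pd i g z" unfolding pd_def real_differentiable_def by simp
qed

lemma dpart_local_open:
  assumes "open_n n S" "z \<in> S" "\<forall>w\<in>S. f w = g w"
  shows "dpart i f z = dpart i g z" "pd i f z \<longleftrightarrow> pd i g z"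
proof -
  obtain d where d: "d > 0" "cube n z d \<subseteq> S" using open_n_cube[OF assms(1,2)] by blast
  show "dpart i f z = dpart i g z" "pd i f z \<longleftrightarrow> pd i g z"
    using dpart_local[OF d(1), of n z f g i] d(2) assms(3) by auto
qed

lemma dpart_const: "dpart i (\<lambda>y. c) z = 0" "pd i (\<lambda>y. c) z"
  using DERIV_dpart[of "\<lambda>y. c" z i 0] by auto

lemma dpart_add:
  assumes "pd i f z" "pd i g z"
  shows "dpart i (\<lambda>y. f y + g y) z = dpart i f z + dpart i g z" "pd i (\<lambda>y. f y + g y) z"
  using DERIV_dpart[OF DERIV_add[OF pd_DERIV[OF assms(1)] pd_DERIV[OF assms(2)]]] by auto

lemma dpart_diff:
  assumes "pd i f z" "pd i g z"
  shows "dpart i (\<lambda>y. f y - g y) z = dpart i f z - dpart i g z" "pd i (\<lambda>y. f y - g y) z"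
  using DERIV_dpart[OF DERIV_diff[OF pd_DERIV[OF assms(1)] pd_DERIV[OF assms(2)]]] by auto

lemma dpart_mult:
  assumes "pd i f z" "pd i g z"
  shows "dpart i (\<lambda>y. f y * g y) z = dpart i f z * g z + f z * dpart i g z" "pd i (\<lambda>y. f y * g y) z"
  using DERIV_dpart[OF DERIV_mult[OF pd_DERIV[OF assms(1)] pd_DERIV[OF assms(2)]]] by auto

lemma dpart_div:
  assumes "pd i f z" "pd i g z" "g z \<noteq> 0"
  shows "dpart i (\<lambda>y. f y / g y) z = (dpart i f z * g z - f z * dpart i g z) / (g z * g z)"
        "pd i (\<lambda>y. f y / g y) z"
  using DERIV_dpart[OF DERIV_divide[OF pd_DERIV[OF assms(1)] pd_DERIV[OF assms(2)]]] assms(3) by auto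

lemma dpart_sum:
  assumes "finite S" "\<forall>s\<in>S. pd i (f s) z"
  shows "dpart i (\<lambda>y. \<Sum>s\<in>S. f s y) z = (\<Sum>s\<in>S. dpart i (f s) z)" "pd i (\<lambda>y. \<Sum>s\<in>S. f s y) z"
proof -
  have "((\<lambda>t. \<Sum>s\<in>S. f s (z(i := t))) has_real_derivative (\<Sum>s\<in>S. dpart i (f s) z)) (at (z i))"
    by (rule DERIV_sum) (use assms(2) pd_DERIV in blast)
  then show "dpart i (\<lambda>y. \<Sum>s\<in>S. f s y) z = (\<Sum>s\<in>S. dpart i (f s) z)" "pd i (\<lambda>y. \<Sum>s\<in>S. f s y) z"
    using DERIV_dpart[of "\<lambda>y. \<Sum>s\<in>S. f s y" z i] by auto
qed

lemma dpart_coord: "dpart i (\<lambda>y. y k) z = (if i = k then 1 else 0)" "pd i (\<lambda>y. y k) z"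
proof -
  have "((\<lambda>t. (z(i := t)) k) has_real_derivative (if i = k then 1 else 0)) (at (z i))"
    by (cases "i = k") auto
  then show "dpart i (\<lambda>y. y k) z = (if i = k then 1 else 0)" "pd i (\<lambda>y. y k) z"
    using DERIV_dpart[of "\<lambda>y. y k" z i] by auto
qed

lemma dpart_indep:
  assumes "\<forall>t. f (z(i := t)) = f z"
  shows "dpart i f z = 0" "pd i f z"
proof -
  have "(\<lambda>t. f (z(i := t))) = (\<lambda>t. f z)" using assms by auto
  then have "((\<lambda>t. f (z(i := t))) has_real_derivative 0) (at (z i))" by simp
  then show "dpart i f z = 0" "pd i f z" using DERIV_dpart by auto
qed

lemma cont_nD:
  assumes "cont_n n N f" "z \<in> N" "e > 0"
  shows "\<exists>d>0. \<forall>w\<in>N. (\<forall>j\<in>{1..n}. \<bar>w j - z j\<bar> < d) \<longrightarrow> \<bar>f w - f z\<bar> < e"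
  using assms unfolding cont_n_def by blast

definition cfil :: "nat \<Rightarrow> pt set \<Rightarrow> pt \<Rightarrow> pt filter" where
  "cfil n N z = (INF d\<in>{0<..}. principal {w\<in>N. \<forall>j\<in>{1..n}. \<bar>w j - z j\<bar> < (d::real)})"

lemma eventually_cfil:
  "eventually P (cfil n N z) \<longleftrightarrow> (\<exists>d>0. \<forall>w\<in>N. (\<forall>j\<in>{1..n}. \<bar>w j - z j\<bar> < d) \<longrightarrow> P w)"
  unfolding cfil_def
proof (subst eventually_INF_base)
  show "{0<..} \<noteq> ({} :: real set)" by auto
next
  fix a b :: real assume "a \<in> {0<..}" "b \<in> {0<..}"
  then show "\<exists>x\<in>{0<..}. principal {w \<in> N. \<forall>j\<in>{1..n}. \<bar>w j - z j\<bar> < x}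
      \<le> inf (principal {w \<in> N. \<forall>j\<in>{1..n}. \<bar>w j - z j\<bar> < a}) (principal {w \<in> N. \<forall>j\<in>{1..n}. \<bar>w j - z j\<bar> < b})"
    by (intro bexI[of _ "min a b"]) auto
next
  show "(\<exists>b\<in>{0<..}. eventually P (principal {w \<in> N. \<forall>j\<in>{1..n}. \<bar>w j - z j\<bar> < b})) =
    (\<exists>d>0. \<forall>w\<in>N. (\<forall>j\<in>{1..n}. \<bar>w j - z j\<bar> < d) \<longrightarrow> P w)"
    by (auto simp: eventually_principal)
qed

lemma cont_n_tendsto: "cont_n n N f \<longleftrightarrow> (\<forall>z\<in>N. (f \<longlongrightarrow> f z) (cfil n N z))"
  unfolding cont_n_def tendsto_iff eventually_cfil dist_real_def by blast

lemma cont_n_const: "cont_n n N (\<lambda>y. c)"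
  unfolding cont_n_tendsto by simp

lemma cont_n_coord: "k \<in> {1..n} \<Longrightarrow> cont_n n N (\<lambda>y. y k)"
  unfolding cont_n_def by (intro ballI allI impI, rule_tac x=\<epsilon> in exI) auto

lemma cont_n_add: "cont_n n N f \<Longrightarrow> cont_n n N g \<Longrightarrow> cont_n n N (\<lambda>y. f y + g y)"
  unfolding cont_n_tendsto by (auto intro: tendsto_add)

lemma cont_n_diff: "cont_n n N f \<Longrightarrow> cont_n n N g \<Longrightarrow> cont_n n N (\<lambda>y. f y - g y)"
  unfolding cont_n_tendsto by (auto intro: tendsto_diff)

lemma cont_n_mult: "cont_n n N f \<Longrightarrow> cont_n n N g \<Longrightarrow> cont_n n N (\<lambda>y. f y * g y)"
  unfolding cont_n_tendsto by (auto intro: tendsto_mult)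

lemma cont_n_div: "cont_n n N f \<Longrightarrow> cont_n n N g \<Longrightarrow> \<forall>y\<in>N. g y \<noteq> 0 \<Longrightarrow> cont_n n N (\<lambda>y. f y / g y)"
  unfolding cont_n_tendsto by (auto intro: tendsto_divide)

lemma cont_n_sum: "finite S \<Longrightarrow> \<forall>s\<in>S. cont_n n N (f s) \<Longrightarrow> cont_n n N (\<lambda>y. \<Sum>s\<in>S. f s y)"
  unfolding cont_n_tendsto by (auto intro: tendsto_sum)

lemma cont_n_mono: "cont_n n N f \<Longrightarrow> M \<subseteq> N \<Longrightarrow> cont_n n M f"
  unfolding cont_n_def by blast

lemma cont_n_local: "cont_n n N f \<Longrightarrow> \<forall>y\<in>N. f y = g y \<Longrightarrow> cont_n n N g"
  unfolding cont_n_def by auto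

lemma cont_n_nonzero:
  assumes "cont_n n N f" "z \<in> N" "f z \<noteq> 0"
  shows "\<exists>d>0. \<forall>w\<in>N \<inter> cube n z d. f w \<noteq> 0"
proof -
  obtain d where d: "d > 0" "\<forall>w\<in>N. (\<forall>j\<in>{1..n}. \<bar>w j - z j\<bar> < d) \<longrightarrow> \<bar>f w - f z\<bar> < \<bar>f z\<bar>"
    using cont_nD[OF assms(1,2), of "\<bar>f z\<bar>"] assms(3) by auto
  show ?thesis
    by (rule exI[of _ d]) (use d in \<open>auto simp: cube_def\<close>)
qed

definition reg :: "nat \<Rightarrow> pt set \<Rightarrow> pt \<Rightarrow> (pt \<Rightarrow> real) \<Rightarrow> bool" where
  "reg n N z f \<longleftrightarrow> cont_n n N f \<and> (\<forall>i\<in>{1..n}. pd i f z)"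

lemma reg_const: "reg n N z (\<lambda>y. c)"
  by (simp add: reg_def cont_n_const dpart_const)

lemma reg_add: "reg n N z f \<Longrightarrow> reg n N z g \<Longrightarrow> reg n N z (\<lambda>y. f y + g y)"
  by (simp add: reg_def cont_n_add dpart_add)

lemma reg_diff: "reg n N z f \<Longrightarrow> reg n N z g \<Longrightarrow> reg n N z (\<lambda>y. f y - g y)"
  by (simp add: reg_def cont_n_diff dpart_diff)

lemma reg_mult: "reg n N z f \<Longrightarrow> reg n N z g \<Longrightarrow> reg n N z (\<lambda>y. f y * g y)"
  by (simp add: reg_def cont_n_mult dpart_mult)

lemma reg_div: "reg n N z f \<Longrightarrow> reg n N z g \<Longrightarrow> \<forall>y\<in>N. g y \<noteq> 0 \<Longrightarrow> z \<in> N \<Longrightarrow> reg n N z (\<lambda>y. f y / g y)"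
  by (simp add: reg_def cont_n_div dpart_div)

lemma reg_sum: "finite S \<Longrightarrow> \<forall>s\<in>S. reg n N z (f s) \<Longrightarrow> reg n N z (\<lambda>y. \<Sum>s\<in>S. f s y)"
  by (simp add: reg_def cont_n_sum dpart_sum)

lemma reg_mono: "reg n N z f \<Longrightarrow> M \<subseteq> N \<Longrightarrow> reg n M z f"
  unfolding reg_def using cont_n_mono by blast

definition smk :: "nat \<Rightarrow> pt set \<Rightarrow> nat \<Rightarrow> (pt \<Rightarrow> real) \<Rightarrow> bool" where
  "smk n U k f \<longleftrightarrow> (\<forall>xs. set xs \<subseteq> {1..n} \<and> length xs \<le> k \<longrightarrow>
      cont_n n U (ipart xs f) \<and> (\<forall>i\<in>{1..n}. \<forall>z\<in>U. pd i (ipart xs f) z))"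

lemma smooth_on_smk: "smooth_on n U f \<longleftrightarrow> (\<forall>k. smk n U k f)"
  unfolding smooth_on_def smk_def pd_def by blast

lemma ipart_snoc: "ipart (xs @ [i]) f = ipart xs (dpart i f)"
  by (induction xs) auto

lemma ipart_local:
  assumes "open_n n U" "\<forall>z\<in>U. f z = g z"
  shows "\<forall>z\<in>U. ipart xs f z = ipart xs g z"
proof (induction xs)
  case Nil then show ?case using assms by simp
next
  case (Cons i xs)
  show ?case using dpart_local_open(1)[OF assms(1) _ Cons] by simp
qed

lemma smk_local:
  assumes U: "open_n n U" and eq: "\<forall>z\<in>U. f z = g z" and s: "smk n U k f"
  shows "smk n U k g"
  unfolding smk_def
proof (intro allI impI conjI ballI)
  fix xs assume H: "set xs \<subseteq> {1..n} \<and> length xs \<le> k"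
  have eqi: "\<forall>z\<in>U. ipart xs f z = ipart xs g z" by (rule ipart_local[OF U eq])
  show "cont_n n U (ipart xs g)" using s H eqi unfolding smk_def by (metis cont_n_local)
  fix i z assume "i \<in> {1..n}" "z \<in> U"
  then show "pd i (ipart xs g) z" using s H dpart_local_open(2)[OF U \<open>z \<in> U\<close> eqi] unfolding smk_def by blast
qed

lemma smk_mono: "smk n U k f \<Longrightarrow> k' \<le> k \<Longrightarrow> smk n U k' f"
  unfolding smk_def by auto

lemma smk_0: "smk n U 0 f \<longleftrightarrow> cont_n n U f \<and> (\<forall>i\<in>{1..n}. \<forall>z\<in>U. pd i f z)"
  unfolding smk_def by auto

lemma smk_dpart: "smk n U (Suc k) f \<Longrightarrow> i0 \<in> {1..n} \<Longrightarrow> smk n U k (dpart i0 f)"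
  unfolding smk_def
proof (intro allI impI)
  fix xs assume H: "\<forall>xs. set xs \<subseteq> {1..n} \<and> length xs \<le> Suc k \<longrightarrow>
      cont_n n U (ipart xs f) \<and> (\<forall>i\<in>{1..n}. \<forall>z\<in>U. pd i (ipart xs f) z)"
    and i: "i0 \<in> {1..n}" and hxs: "set xs \<subseteq> {1..n} \<and> length xs \<le> k"
  have A: "set (xs @ [i0]) \<subseteq> {1..n} \<and> length (xs @ [i0]) \<le> Suc k" using i hxs by auto
  show "cont_n n U (ipart xs (dpart i0 f)) \<and> (\<forall>i\<in>{1..n}. \<forall>z\<in>U. pd i (ipart xs (dpart i0 f)) z)"
    using H[rule_format, OF A] by (simp add: ipart_snoc)
qed

lemma smk_SucI:
  assumes U: "open_n n U" and s0: "smk n U 0 f"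
    and step: "\<And>i. i \<in> {1..n} \<Longrightarrow> smk n U k (dpart i f)"
  shows "smk n U (Suc k) f"
  unfolding smk_def
proof (intro allI impI)
  fix xs assume hxs: "set xs \<subseteq> {1..n} \<and> length xs \<le> Suc k"
  show "cont_n n U (ipart xs f) \<and> (\<forall>i\<in>{1..n}. \<forall>z\<in>U. pd i (ipart xs f) z)"
  proof (cases xs rule: rev_cases)
    case Nil then show ?thesis using s0 by (simp add: smk_0)
  next
    case (snoc xs' i)
    then have "i \<in> {1..n}" "set xs' \<subseteq> {1..n} \<and> length xs' \<le> k" using hxs by auto
    then show ?thesis using step[of i] unfolding smk_def snoc ipart_snoc by blast
  qed
qed

lemma smk_add:
  assumes U: "open_n n U"
  shows "smk n U k f \<Longrightarrow> smk n U k g \<Longrightarrow> smk n U k (\<lambda>y. f y + g y)"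
proof (induction k arbitrary: f g)
  case 0 then show ?case by (simp add: smk_0 cont_n_add dpart_add)
next
  case (Suc k)
  have f0: "smk n U 0 f" and g0: "smk n U 0 g" using Suc.prems smk_mono by blast+
  show ?case
  proof (rule smk_SucI[OF U])
    show "smk n U 0 (\<lambda>y. f y + g y)" using f0 g0 by (simp add: smk_0 cont_n_add dpart_add)
  next
    fix i assume i: "i \<in> {1..n}"
    have A: "smk n U k (\<lambda>y. dpart i f y + dpart i g y)"
      by (rule Suc.IH[OF smk_dpart[OF Suc.prems(1) i] smk_dpart[OF Suc.prems(2) i]])
    have B: "\<forall>z\<in>U. dpart i f z + dpart i g z = dpart i (\<lambda>y. f y + g y) z"
    proof
      fix z assume z: "z \<in> U"
      have "pd i f z" "pd i g z" using f0 g0 i z unfolding smk_0 by blast+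
      then show "dpart i f z + dpart i g z = dpart i (\<lambda>y. f y + g y) z" by (simp only: dpart_add(1))
    qed
    show "smk n U k (dpart i (\<lambda>y. f y + g y))"
      using smk_local[OF U B A] by simp
  qed
qed

lemma smk_mult:
  assumes U: "open_n n U"
  shows "smk n U k f \<Longrightarrow> smk n U k g \<Longrightarrow> smk n U k (\<lambda>y. f y * g y)"
proof (induction k arbitrary: f g)
  case 0 then show ?case by (simp add: smk_0 cont_n_mult dpart_mult)
next
  case (Suc k)
  have f0: "smk n U 0 f" and g0: "smk n U 0 g" using Suc.prems smk_mono by blast+
  show ?case
  proof (rule smk_SucI[OF U])
    show "smk n U 0 (\<lambda>y. f y * g y)" using f0 g0 by (simp add: smk_0 cont_n_mult dpart_mult)
  next
    fix i assume i: "i \<in> {1..n}"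
    have fk: "smk n U k f" and gk: "smk n U k g" using Suc.prems smk_mono by auto
    have A1: "smk n U k (\<lambda>y. dpart i f y * g y)" by (rule Suc.IH[OF smk_dpart[OF Suc.prems(1) i] gk])
    have A2: "smk n U k (\<lambda>y. f y * dpart i g y)" by (rule Suc.IH[OF fk smk_dpart[OF Suc.prems(2) i]])
    have A: "smk n U k (\<lambda>y. dpart i f y * g y + f y * dpart i g y)"
      by (rule smk_add[OF U A1 A2])
    have B: "\<forall>z\<in>U. dpart i f z * g z + f z * dpart i g z = dpart i (\<lambda>y. f y * g y) z"
    proof
      fix z assume z: "z \<in> U"
      have "pd i f z" "pd i g z" using f0 g0 i z unfolding smk_0 by blast+
      then show "dpart i f z * g z + f z * dpart i g z = dpart i (\<lambda>y. f y * g y) z" by (simp only: dpart_mult(1))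
    qed
    show "smk n U k (dpart i (\<lambda>y. f y * g y))"
      using smk_local[OF U B A] by simp
  qed
qed

lemma smk_const: "smk n U k (\<lambda>y. c)"
proof -
  have "\<And>xs. ipart xs (\<lambda>y. c) = (\<lambda>y. if xs = [] then c else 0)"
  proof -
    fix xs show "ipart xs (\<lambda>y. c) = (\<lambda>y. if xs = [] then c else 0)"
    proof (induction xs)
      case Nil then show ?case by simp
    next
      case (Cons a xs)
      have "ipart (a # xs) (\<lambda>y. c) = dpart a (\<lambda>y. if xs = [] then c else 0)"
        by (simp only: ipart.simps Cons.IH)
      also have "\<dots> = (\<lambda>y. 0)" by (rule ext) (rule dpart_const(1))
      finally show ?case by simp
    qed
  qed
  then show ?thesis unfolding smk_def by (simp add: cont_n_const dpart_const)
qed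

lemma smk_coord:
  assumes U: "open_n n U" and k: "m \<in> {1..n}"
  shows "smk n U k (\<lambda>y. y m)"
proof (cases k)
  case 0 then show ?thesis using k by (simp add: smk_0 cont_n_coord dpart_coord)
next
  case (Suc k')
  show ?thesis unfolding Suc
  proof (rule smk_SucI[OF U])
    show "smk n U 0 (\<lambda>y. y m)" using k by (simp add: smk_0 cont_n_coord dpart_coord)
    fix i show "smk n U k' (dpart i (\<lambda>y. y m))"
      unfolding dpart_coord by (rule smk_const)
  qed
qed

lemma smooth_add: "open_n n U \<Longrightarrow> smooth_on n U f \<Longrightarrow> smooth_on n U g \<Longrightarrow> smooth_on n U (\<lambda>y. f y + g y)"
  unfolding smooth_on_smk using smk_add by blast

lemma smooth_mult: "open_n n U \<Longrightarrow> smooth_on n U f \<Longrightarrow> smooth_on n U g \<Longrightarrow> smooth_on n U (\<lambda>y. f y * g y)"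
  unfolding smooth_on_smk using smk_mult by blast

lemma smooth_const: "smooth_on n U (\<lambda>y. c)"
  unfolding smooth_on_smk using smk_const by blast

lemma smooth_coord: "open_n n U \<Longrightarrow> m \<in> {1..n} \<Longrightarrow> smooth_on n U (\<lambda>y. y m)"
  unfolding smooth_on_smk using smk_coord by blast

lemma smooth_dpart: "smooth_on n U f \<Longrightarrow> i \<in> {1..n} \<Longrightarrow> smooth_on n U (dpart i f)"
  unfolding smooth_on_smk using smk_dpart by blast

lemma smooth_diff: "open_n n U \<Longrightarrow> smooth_on n U f \<Longrightarrow> smooth_on n U g \<Longrightarrow> smooth_on n U (\<lambda>y. f y - g y)"
proof -
  assume U: "open_n n U" and f: "smooth_on n U f" and g: "smooth_on n U g"
  have "smooth_on n U (\<lambda>y. f y + (-1) * g y)"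
    by (rule smooth_add[OF U f smooth_mult[OF U smooth_const g]])
  then show ?thesis by simp
qed

lemma smooth_sum:
  assumes U: "open_n n U"
  shows "finite S \<Longrightarrow> \<forall>s\<in>S. smooth_on n U (f s) \<Longrightarrow> smooth_on n U (\<lambda>y. \<Sum>s\<in>S. f s y)"
proof (induction S rule: finite_induct)
  case empty then show ?case by (simp add: smooth_const)
next
  case (insert s S)
  then show ?case using smooth_add[OF U, of "f s" "\<lambda>y. \<Sum>s\<in>S. f s y"] by simp
qed

lemma smooth_local: "open_n n U \<Longrightarrow> \<forall>z\<in>U. f z = g z \<Longrightarrow> smooth_on n U f \<Longrightarrow> smooth_on n U g"
  unfolding smooth_on_smk using smk_local by blast

lemma smooth_reg: "smooth_on n U f \<Longrightarrow> z \<in> U \<Longrightarrow> reg n U z f"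
  unfolding smooth_on_smk reg_def smk_0[symmetric] by (metis smk_0)



section \<open>Leibniz rule for the Lie bracket\<close>

lemma lie_leibniz:
  assumes fI: "finite I" and d: "d > 0"
    and eq: "\<forall>y\<in>cube n y0 d. \<forall>j\<in>{1..n}. u y j = (\<Sum>k\<in>I. c k y * F k y j)"
    and pc: "\<forall>k\<in>I. \<forall>i\<in>{1..n}. pd i (c k) y0"
    and pF: "\<forall>k\<in>I. \<forall>i\<in>{1..n}. \<forall>j\<in>{1..n}. pd i (\<lambda>y. F k y j) y0"
    and j: "j \<in> {1..n}"
  shows "lie n a u y0 j =
    (\<Sum>k\<in>I. (\<Sum>i=1..n. a y0 i * dpart i (c k) y0) * F k y0 j + c k y0 * lie n a (F k) y0 j)"
proof -
  have y0: "y0 \<in> cube n y0 d" using d by (rule cube_center)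
  have D: "dpart i (\<lambda>y. u y j) y0 =
      (\<Sum>k\<in>I. dpart i (c k) y0 * F k y0 j + c k y0 * dpart i (\<lambda>y. F k y j) y0)" if i: "i \<in> {1..n}" for i
  proof -
    have "dpart i (\<lambda>y. u y j) y0 = dpart i (\<lambda>y. \<Sum>k\<in>I. c k y * F k y j) y0"
      by (rule dpart_local(1)[OF d]) (use eq j in auto)
    also have "\<dots> = (\<Sum>k\<in>I. dpart i (\<lambda>y. c k y * F k y j) y0)"
      by (rule dpart_sum(1)[OF fI]) (use pc pF i j dpart_mult(2) in blast)
    also have "\<dots> = (\<Sum>k\<in>I. dpart i (c k) y0 * F k y0 j + c k y0 * dpart i (\<lambda>y. F k y j) y0)"
      by (rule sum.cong[OF refl], rule dpart_mult(1)) (use pc pF i j in auto)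
    finally show ?thesis .
  qed
  have U0: "u y0 i = (\<Sum>k\<in>I. c k y0 * F k y0 i)" if "i \<in> {1..n}" for i
    using eq y0 that by blast
  have "lie n a u y0 j = (\<Sum>i=1..n. a y0 i * dpart i (\<lambda>y. u y j) y0 - u y0 i * dpart i (\<lambda>y. a y j) y0)"
    by (simp add: lie_def)
  also have "\<dots> = (\<Sum>i=1..n. \<Sum>k\<in>I. a y0 i * dpart i (c k) y0 * F k y0 j
        + c k y0 * (a y0 i * dpart i (\<lambda>y. F k y j) y0 - F k y0 i * dpart i (\<lambda>y. a y j) y0))"
  proof (rule sum.cong[OF refl])
    fix i assume i: "i \<in> {1..n}"
    show "a y0 i * dpart i (\<lambda>y. u y j) y0 - u y0 i * dpart i (\<lambda>y. a y j) y0 =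
      (\<Sum>k\<in>I. a y0 i * dpart i (c k) y0 * F k y0 j
        + c k y0 * (a y0 i * dpart i (\<lambda>y. F k y j) y0 - F k y0 i * dpart i (\<lambda>y. a y j) y0))"
      unfolding D[OF i] U0[OF i]
      by (simp add: sum_distrib_left sum_distrib_right sum_subtractf[symmetric] sum.distrib[symmetric] algebra_simps)
  qed
  also have "\<dots> = (\<Sum>k\<in>I. \<Sum>i=1..n. a y0 i * dpart i (c k) y0 * F k y0 j
        + c k y0 * (a y0 i * dpart i (\<lambda>y. F k y j) y0 - F k y0 i * dpart i (\<lambda>y. a y j) y0))"
    by (rule sum.swap)
  also have "\<dots> = (\<Sum>k\<in>I. (\<Sum>i=1..n. a y0 i * dpart i (c k) y0) * F k y0 j + c k y0 * lie n a (F k) y0 j)"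
    by (rule sum.cong[OF refl]) (simp add: lie_def sum.distrib sum_distrib_left sum_distrib_right)
  finally show ?thesis .
qed

section \<open>Elimination\<close>

lemma elim_sum:
  fixes G :: "nat \<Rightarrow> nat \<Rightarrow> real"
  shows "(\<Sum>k\<in>I. c k * (G k j - G k j0 / G r j0 * G r j)) =
    (\<Sum>k\<in>I. c k * G k j) - (\<Sum>k\<in>I. c k * G k j0) / G r j0 * G r j"
  by (simp add: right_diff_distrib sum_subtractf sum_distrib_right sum_divide_distrib mult.assoc)

lemma exists_nonzero_comp:
  assumes ind: "iindep n G (insert r I)" and fI: "finite I"
  shows "\<exists>j0\<in>{1..n}. G r j0 \<noteq> 0"
proof (rule ccontr)
  assume "\<not> ?thesis"
  then have z: "\<forall>j\<in>{1..n}. G r j = 0" by blast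
  let ?c = "\<lambda>k. if k = r then 1 else (0::real)"
  have "\<forall>j\<in>{1..n}. (\<Sum>k\<in>insert r I. ?c k * G k j) = 0"
  proof
    fix j assume j: "j \<in> {1..n}"
    have "(\<Sum>k\<in>insert r I. ?c k * G k j) = (\<Sum>k\<in>insert r I. if k = r then G k j else 0)"
      by (rule sum.cong) auto
    also have "\<dots> = G r j" using fI by simp
    finally show "(\<Sum>k\<in>insert r I. ?c k * G k j) = 0" using z j by simp
  qed
  moreover have "(\<forall>j\<in>{1..n}. (\<Sum>k\<in>insert r I. ?c k * G k j) = 0) \<longrightarrow> (\<forall>k\<in>insert r I. ?c k = 0)"
    using ind unfolding iindep_def by (rule spec)
  ultimately have "\<forall>k\<in>insert r I. ?c k = 0" by blast
  then have "?c r = 0" by blast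
  then show False by simp
qed

lemma elim_indep_down:
  assumes ind: "iindep n (\<lambda>k. F k y) (insert r I)" and fI: "finite I" and rI: "r \<notin> I"
    and j0: "j0 \<in> {1..n}"
  shows "iindep n (\<lambda>k. (\<lambda>j. F k y j - F k y j0 / F r y j0 * F r y j)) I"
  unfolding iindep_def
proof (intro allI impI)
  fix c assume s: "\<forall>j\<in>{1..n}. (\<Sum>k\<in>I. c k * (F k y j - F k y j0 / F r y j0 * F r y j)) = 0"
  let ?c = "c(r := - (\<Sum>k\<in>I. c k * F k y j0) / F r y j0)"
  have "\<forall>j\<in>{1..n}. (\<Sum>k\<in>insert r I. ?c k * F k y j) = 0"
  proof
    fix j assume j: "j \<in> {1..n}"
    have e: "(\<Sum>k\<in>I. ?c k * F k y j) = (\<Sum>k\<in>I. c k * F k y j)"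
      by (rule sum.cong) (use rI in auto)
    have "(\<Sum>k\<in>insert r I. ?c k * F k y j) = ?c r * F r y j + (\<Sum>k\<in>I. ?c k * F k y j)"
      using fI rI by simp
    also have "\<dots> = (\<Sum>k\<in>I. c k * F k y j) - (\<Sum>k\<in>I. c k * F k y j0) / F r y j0 * F r y j"
      unfolding e by simp
    also have "\<dots> = 0"
    proof -
      have H0: "(\<Sum>k\<in>I. c k * (F k y j - F k y j0 / F r y j0 * F r y j)) = 0" using s j by blast
      show ?thesis by (rule trans[OF elim_sum[symmetric] H0])
    qed
    finally show "(\<Sum>k\<in>insert r I. ?c k * F k y j) = 0" .
  qed
  moreover have "(\<forall>j\<in>{1..n}. (\<Sum>k\<in>insert r I. ?c k * F k y j) = 0) \<longrightarrow> (\<forall>k\<in>insert r I. ?c k = 0)"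
    using ind unfolding iindep_def by (rule spec)
  ultimately have "\<forall>k\<in>insert r I. ?c k = 0" by blast
  then show "\<forall>k\<in>I. c k = 0"
  proof (intro ballI)
    fix k assume A: "\<forall>k\<in>insert r I. ?c k = 0" and k: "k \<in> I"
    then have "?c k = 0" by blast
    moreover have "k \<noteq> r" using k rI by blast
    ultimately show "c k = 0" by simp
  qed
qed

lemma elim_indep_up:
  assumes ind: "iindep n (\<lambda>k. (\<lambda>j. F k y j - F k y j0 / F r y j0 * F r y j)) I"
    and fI: "finite I" and rI: "r \<notin> I" and j0: "j0 \<in> {1..n}" and nz: "F r y j0 \<noteq> 0"
  shows "iindep n (\<lambda>k. F k y) (insert r I)"
  unfolding iindep_def
proof (intro allI impI)
  fix c assume s: "\<forall>j\<in>{1..n}. (\<Sum>k\<in>insert r I. c k * F k y j) = 0"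
  have s': "c r * F r y j + (\<Sum>k\<in>I. c k * F k y j) = 0" if "j \<in> {1..n}" for j
    using s that fI rI by simp
  have cr: "c r = - (\<Sum>k\<in>I. c k * F k y j0) / F r y j0"
    using s'[OF j0] nz by (simp add: field_simps)
  have "\<forall>j\<in>{1..n}. (\<Sum>k\<in>I. c k * (F k y j - F k y j0 / F r y j0 * F r y j)) = 0"
  proof
    fix j assume j: "j \<in> {1..n}"
    have "(\<Sum>k\<in>I. c k * (F k y j - F k y j0 / F r y j0 * F r y j)) =
      (\<Sum>k\<in>I. c k * F k y j) - (\<Sum>k\<in>I. c k * F k y j0) / F r y j0 * F r y j" by (rule elim_sum)
    also have "\<dots> = 0" using s'[OF j] cr by (simp add: algebra_simps)
    finally show "(\<Sum>k\<in>I. c k * (F k y j - F k y j0 / F r y j0 * F r y j)) = 0" .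
  qed
  then have cI: "\<forall>k\<in>I. c k = 0" using ind unfolding iindep_def by blast
  then have "(\<Sum>k\<in>I. c k * F k y j0) = 0" by simp
  then have "c r = 0" using cr by simp
  then show "\<forall>k\<in>insert r I. c k = 0" using cI by simp
qed

lemma indep_open:
  assumes "finite I"
  shows "d > 0 \<Longrightarrow> \<forall>k\<in>I. \<forall>j\<in>{1..n}. cont_n n (cube n y0 d) (\<lambda>y. F k y j) \<Longrightarrow>
    iindep n (\<lambda>k. F k y0) I \<Longrightarrow> \<exists>d'>0. d' \<le> d \<and> (\<forall>y\<in>cube n y0 d'. iindep n (\<lambda>k. F k y) I)"
  using assms
proof (induction I arbitrary: F d rule: finite_induct)
  case empty then show ?case by (intro exI[of _ d]) (auto simp: iindep_def)
next
  case (insert r I)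
  obtain j0 where j0: "j0 \<in> {1..n}" "F r y0 j0 \<noteq> 0"
    using exists_nonzero_comp[OF insert.prems(3) insert.hyps(1)] by blast
  have cr: "cont_n n (cube n y0 (d::real)) (\<lambda>y. F r y j0)" using insert.prems(2) j0(1) by blast
  obtain e where e: "e > 0" "\<forall>w\<in>cube n y0 d \<inter> cube n y0 e. F r w j0 \<noteq> 0"
    using cont_n_nonzero[OF cr cube_center[OF insert.prems(1)] j0(2)] by blast
  define d1 where "d1 = min d e"
  have d1: "d1 > 0" "d1 \<le> d" using e insert.prems(1) by (auto simp: d1_def)
  have sub: "cube n y0 d1 \<subseteq> cube n y0 d" by (rule cube_mono) (simp add: d1_def)
  have nz: "\<forall>w\<in>cube n y0 d1. F r w j0 \<noteq> 0" using e by (auto simp: d1_def cube_def)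
  define H where "H = (\<lambda>k y j. F k y j - F k y j0 / F r y j0 * F r y j)"
  have cH: "\<forall>k\<in>I. \<forall>j\<in>{1..n}. cont_n n (cube n y0 d1) (\<lambda>y. H k y j)"
  proof (intro ballI)
    fix k j assume k: "k \<in> I" and j: "j \<in> {1..n}"
    have c1: "cont_n n (cube n y0 d1) (\<lambda>y. F k y j)" "cont_n n (cube n y0 d1) (\<lambda>y. F k y j0)"
      "cont_n n (cube n y0 d1) (\<lambda>y. F r y j)" "cont_n n (cube n y0 d1) (\<lambda>y. F r y j0)"
      using insert.prems(2) k j j0(1) cont_n_mono[OF _ sub] by blast+
    show "cont_n n (cube n y0 d1) (\<lambda>y. H k y j)" unfolding H_def
      by (intro cont_n_diff cont_n_mult cont_n_div c1 nz)
  qed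
  have iH: "iindep n (\<lambda>k. H k y0) I" unfolding H_def
    by (rule elim_indep_down[OF insert.prems(3) insert.hyps(1,2) j0(1)])
  obtain d2 where d2: "d2 > 0" "d2 \<le> d1" "\<forall>y\<in>cube n y0 d2. iindep n (\<lambda>k. H k y) I"
    using insert.IH[OF d1(1) cH iH] by blast
  show ?case
  proof (intro exI[of _ d2] conjI ballI)
    show "d2 > 0" "d2 \<le> d" using d2 d1 by auto
    fix y assume y: "y \<in> cube n y0 d2"
    have yn: "F r y j0 \<noteq> 0" using nz y cube_mono[OF d2(2)] by blast
    show "iindep n (\<lambda>k. F k y) (insert r I)"
      by (rule elim_indep_up[where F=F and y=y and r=r and I=I, OF _ insert.hyps(1,2) j0(1) yn]) (use d2(3) y in \<open>simp add: H_def\<close>)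
  qed
qed

lemma represent:
  assumes "finite I"
  shows "d > 0 \<Longrightarrow> \<forall>k\<in>I. \<forall>j\<in>{1..n}. reg n (cube n y0 d) y0 (\<lambda>y. F k y j) \<Longrightarrow>
    \<forall>j\<in>{1..n}. reg n (cube n y0 d) y0 (\<lambda>y. u y j) \<Longrightarrow>
    iindep n (\<lambda>k. F k y0) I \<Longrightarrow> \<forall>y\<in>cube n y0 d. ispan n (\<lambda>k. F k y) I (u y) \<Longrightarrow>
    \<exists>d'>0. d' \<le> d \<and> (\<exists>c. (\<forall>k\<in>I. reg n (cube n y0 d') y0 (c k)) \<and>
       (\<forall>y\<in>cube n y0 d'. \<forall>j\<in>{1..n}. u y j = (\<Sum>k\<in>I. c k y * F k y j)))"
  using assms
proof (induction I arbitrary: F u d rule: finite_induct)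
  case empty
  show ?case
  proof (intro exI[of _ d] conjI exI[of _ "\<lambda>k y. 0"] ballI)
    show "d > 0" "d \<le> d" using empty by auto
  next
    fix y j assume "y \<in> cube n y0 d" "j \<in> {1..n}"
    then show "u y j = (\<Sum>k\<in>{}. 0 * F k y j)" using empty.prems(5) by (simp add: ispan_def)
  qed simp
next
  case (insert r I)
  obtain j0 where j0: "j0 \<in> {1..n}" "F r y0 j0 \<noteq> 0"
    using exists_nonzero_comp[OF insert.prems(4) insert.hyps(1)] by blast
  have cr: "cont_n n (cube n y0 (d::real)) (\<lambda>y. F r y j0)"
    using insert.prems(2) j0(1) unfolding reg_def by blast
  obtain e where e: "e > 0" "\<forall>w\<in>cube n y0 d \<inter> cube n y0 e. F r w j0 \<noteq> 0"
    using cont_n_nonzero[OF cr cube_center[OF insert.prems(1)] j0(2)] by blast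
  define d1 where "d1 = min d e"
  have d1: "d1 > 0" "d1 \<le> d" using e insert.prems(1) by (auto simp: d1_def)
  have sub: "cube n y0 d1 \<subseteq> cube n y0 d" by (rule cube_mono) (simp add: d1_def)
  have nz: "\<forall>w\<in>cube n y0 d1. F r w j0 \<noteq> 0" using e by (auto simp: d1_def cube_def)
  have y0c: "y0 \<in> cube n y0 d1" using d1(1) by (rule cube_center)
  define H where "H = (\<lambda>k y j. F k y j - F k y j0 / F r y j0 * F r y j)"
  define u' where "u' = (\<lambda>y j. u y j - u y j0 / F r y j0 * F r y j)"
  have rF: "reg n (cube n y0 d1) y0 (\<lambda>y. F k y j)" if "k \<in> insert r I" "j \<in> {1..n}" for k j
    using insert.prems(2) that reg_mono[OF _ sub] by blast
  have ru: "reg n (cube n y0 d1) y0 (\<lambda>y. u y j)" if "j \<in> {1..n}" for j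
    using insert.prems(3) that reg_mono[OF _ sub] by blast
  have rH: "\<forall>k\<in>I. \<forall>j\<in>{1..n}. reg n (cube n y0 d1) y0 (\<lambda>y. H k y j)"
    unfolding H_def by (intro ballI reg_diff reg_mult reg_div rF nz y0c j0(1)) auto
  have ru': "\<forall>j\<in>{1..n}. reg n (cube n y0 d1) y0 (\<lambda>y. u' y j)"
    unfolding u'_def by (intro ballI reg_diff reg_mult reg_div rF ru nz y0c j0(1)) auto
  have iH: "iindep n (\<lambda>k. H k y0) I" unfolding H_def
    by (rule elim_indep_down[OF insert.prems(4) insert.hyps(1,2) j0(1)])
  have sH: "\<forall>y\<in>cube n y0 d1. ispan n (\<lambda>k. H k y) I (u' y)"
  proof
    fix y assume y: "y \<in> cube n y0 d1"
    obtain e where e: "\<forall>j\<in>{1..n}. u y j = (\<Sum>k\<in>insert r I. e k * F k y j)"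
      using insert.prems(5) y sub unfolding ispan_def by blast
    have e': "u y j = e r * F r y j + (\<Sum>k\<in>I. e k * F k y j)" if "j \<in> {1..n}" for j
      using e that insert.hyps(1,2) by simp
    have yn: "F r y j0 \<noteq> 0" using nz y by blast
    have "\<forall>j\<in>{1..n}. u' y j = (\<Sum>k\<in>I. e k * H k y j)"
    proof
      fix j assume j: "j \<in> {1..n}"
      have "(\<Sum>k\<in>I. e k * H k y j) = (\<Sum>k\<in>I. e k * F k y j) - (\<Sum>k\<in>I. e k * F k y j0) / F r y j0 * F r y j"
        unfolding H_def by (rule elim_sum)
      moreover have "u' y j = (\<Sum>k\<in>I. e k * F k y j) - (\<Sum>k\<in>I. e k * F k y j0) / F r y j0 * F r y j"
        unfolding u'_def e'[OF j] e'[OF j0(1)] using yn by (simp add: field_simps)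
      ultimately show "u' y j = (\<Sum>k\<in>I. e k * H k y j)" by simp
    qed
    then show "ispan n (\<lambda>k. H k y) I (u' y)" unfolding ispan_def by blast
  qed
  obtain d2 c where d2: "d2 > 0" "d2 \<le> d1" and rc: "\<forall>k\<in>I. reg n (cube n y0 d2) y0 (c k)"
    and ceq: "\<forall>y\<in>cube n y0 d2. \<forall>j\<in>{1..n}. u' y j = (\<Sum>k\<in>I. c k y * H k y j)"
    using insert.IH[OF d1(1) rH ru' iH sH] by blast
  have sub2: "cube n y0 d2 \<subseteq> cube n y0 d1" by (rule cube_mono[OF d2(2)])
  have y0c2: "y0 \<in> cube n y0 d2" using d2(1) by (rule cube_center)
  define c' where "c' = c(r := (\<lambda>y. (u y j0 - (\<Sum>k\<in>I. c k y * F k y j0)) / F r y j0))"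
  show ?case
  proof (intro exI[of _ d2] conjI exI[of _ c'] ballI)
    show "d2 > 0" "d2 \<le> d" using d2 d1 by auto
  next
    fix k assume k: "k \<in> insert r I"
    show "reg n (cube n y0 d2) y0 (c' k)"
    proof (cases "k = r")
      case True
      have "reg n (cube n y0 d2) y0 (\<lambda>y. (u y j0 - (\<Sum>k\<in>I. c k y * F k y j0)) / F r y j0)"
        by (intro reg_div reg_diff reg_sum reg_mult ballI reg_mono[OF ru sub2] reg_mono[OF rF sub2] rc j0(1) y0c2)
           (use nz sub2 insert.hyps rc in auto)
      then show ?thesis using True by (simp add: c'_def)
    next
      case False
      then show ?thesis using rc k by (simp add: c'_def)
    qed
  next
    fix y j assume y: "y \<in> cube n y0 d2" and j: "j \<in> {1..n}"
    have yn: "F r y j0 \<noteq> 0" using nz y sub2 by blast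
    have sI: "(\<Sum>k\<in>I. c' k y * F k y j) = (\<Sum>k\<in>I. c k y * F k y j)" for j
      by (rule sum.cong) (use insert.hyps(2) in \<open>auto simp: c'_def\<close>)
    have "(\<Sum>k\<in>I. c k y * H k y j) = (\<Sum>k\<in>I. c k y * F k y j) - (\<Sum>k\<in>I. c k y * F k y j0) / F r y j0 * F r y j"
      unfolding H_def by (rule elim_sum)
    then have "u' y j = (\<Sum>k\<in>I. c k y * F k y j) - (\<Sum>k\<in>I. c k y * F k y j0) / F r y j0 * F r y j"
      using ceq y j by simp
    then have "u y j = (\<Sum>k\<in>I. c k y * F k y j) + (u y j0 - (\<Sum>k\<in>I. c k y * F k y j0)) / F r y j0 * F r y j"
      unfolding u'_def using yn by (simp add: field_simps)
    also have "\<dots> = (\<Sum>k\<in>insert r I. c' k y * F k y j)"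
      using insert.hyps(1,2) sI[of j] by (simp add: c'_def)
    finally show "u y j = (\<Sum>k\<in>insert r I. c' k y * F k y j)" .
  qed
qed



lemma iindep_cong: "(\<forall>k\<in>I. F k = G k) \<Longrightarrow> iindep n F I = iindep n G I"
proof -
  assume H: "\<forall>k\<in>I. F k = G k"
  then have "\<And>c j. (\<Sum>k\<in>I. c k * F k j) = (\<Sum>k\<in>I. c k * G k j)" by (intro sum.cong) auto
  then show ?thesis unfolding iindep_def by simp
qed

lemma ispan_mono_idx:
  assumes "ispan n F I x" "I \<subseteq> J" "finite J"
  shows "ispan n F J x"
proof (rule ispan_trans[OF assms(1) _ _ assms(3)])
  show "finite I" using assms(2,3) finite_subset by blast
  show "\<forall>k\<in>I. ispan n F J (F k)" using assms(2,3) ispan_mem by blast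
qed

lemma rank_snoc_strict:
  assumes ns: "\<not> in_span n M x"
  shows "rank_n n M + 1 \<le> rank_n n (M @ [x])"
proof -
  obtain I where I: "I \<subseteq> {..<length M}" "iindep n (nth M) I" "card I = rank_n n M"
    using rankI_ex[of "{..<length M}" n "nth M"] unfolding rank_n_rankI by auto
  have fI: "finite I" using I(1) finite_subset by blast
  have eqI: "\<forall>k\<in>I. (M @ [x]) ! k = M ! k" using I(1) by (auto simp: nth_append)
  have i2: "iindep n (nth (M @ [x])) I" using I(2) iindep_cong[OF eqI] by simp
  have mI: "length M \<notin> I" using I(1) by auto
  have "\<not> ispan n (nth (M @ [x])) I ((M @ [x]) ! length M)"
  proof
    assume "ispan n (nth (M @ [x])) I ((M @ [x]) ! length M)"
    then have "ispan n (nth M) I x" using ispan_cong_F[OF eqI] by simp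
    then have "ispan n (nth M) {..<length M} x" using ispan_mono_idx I(1) by blast
    then show False using ns unfolding in_span_ispan by simp
  qed
  then have "iindep n (nth (M @ [x])) (insert (length M) I)"
    using iindep_insert[OF i2 fI mI] by blast
  then have "card (insert (length M) I) \<le> rank_n n (M @ [x])"
    unfolding rank_n_rankI using I(1) by (intro rankI_ge) auto
  then show ?thesis using I(3) fI mI by simp
qed

lemma rank_same_span:
  "\<forall>v\<in>set A. in_span n B v \<Longrightarrow> \<forall>v\<in>set B. in_span n A v \<Longrightarrow> rank_n n A = rank_n n B"
  using rank_mono_span le_antisym by metis

lemma set_dval: "set (dval L y) = (\<lambda>g. g y) ` set L"
  by (simp add: dval_def)

lemma dval_append: "dval (A @ B) y = dval A y @ dval B y"
  by (simp add: dval_def)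

lemma dval_nth: "k < length L \<Longrightarrow> dval L y ! k = (L ! k) y"
  by (simp add: dval_def)

lemma length_dval: "length (dval L y) = length L"
  by (simp add: dval_def)

lemma in_span_dval_mem: "g \<in> set L \<Longrightarrow> in_span n (dval L y) (g y)"
  by (rule in_span_mem) (simp add: set_dval)

section \<open>Persistence of rank deficiency\<close>

lemma persist_core:
  assumes U: "open_n n U" and y0: "y0 \<in> U"
    and sm: "\<forall>g\<in>set L \<union> {w, u}. \<forall>j\<in>{1..n}. smooth_on n U (\<lambda>y. g y j)"
    and L2: "set L2 = set L \<union> {w, u}"
    and L3: "set L3 = set L2 \<union> {lie n a w, lie n a u}"
    and cl: "\<forall>g\<in>set L. lie n a g \<in> set L2"
    and cst: "\<forall>y\<in>U. rank_n n (dval L2 y) = rank_n n (dval L2 y0)"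
    and cA: "in_span n (dval (L @ [w]) y0) (u y0)"
  shows "rank_n n (dval L3 y0) \<le> rank_n n (dval L2 y0) + 1"
proof -
  define M where "M = L @ [w]"
  define m where "m = length M"
  define r where "r = rank_n n (dval L2 y0)"
  have setM: "set M = set L \<union> {w}" by (simp add: M_def)
  have MkM: "M ! k \<in> set M" if "k < m" for k using that by (simp add: m_def)
  have smM: "\<forall>j\<in>{1..n}. smooth_on n U (\<lambda>y. (M ! k) y j)" if "k < m" for k
    using sm MkM[OF that] setM by blast
  have rM: "rank_n n (dval M y0) = r" unfolding r_def
  proof (rule rank_same_span)
    show "\<forall>v\<in>set (dval M y0). in_span n (dval L2 y0) v"
      using L2 setM by (auto simp: set_dval intro!: in_span_dval_mem)
    show "\<forall>v\<in>set (dval L2 y0). in_span n (dval M y0) v"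
    proof
      fix v assume "v \<in> set (dval L2 y0)"
      then obtain g where g: "g \<in> set L2" "v = g y0" by (auto simp: set_dval)
      show "in_span n (dval M y0) v"
      proof (cases "g = u")
        case True then show ?thesis using cA g by (simp add: M_def)
      next
        case False then have "g \<in> set M" using g L2 setM by auto
        then show ?thesis using g in_span_dval_mem by blast
      qed
    qed
  qed
  obtain I0 where I0: "I0 \<subseteq> {..<m}" "iindep n (nth (dval M y0)) I0" "card I0 = r"
    using rankI_ex[of "{..<m}" n "nth (dval M y0)"] rM unfolding rank_n_rankI m_def length_dval by auto
  have eqd: "\<forall>k\<in>I0. dval M y0 ! k = (M ! k) y0" using I0(1) by (auto simp: dval_nth m_def)
  have I0': "iindep n (\<lambda>k. (M ! k) y0) I0"
    using I0(2) iindep_cong[OF eqd] by simp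
  have fI: "finite I0" using I0(1) finite_subset by blast
  obtain d0 where d0: "d0 > 0" "cube n y0 d0 \<subseteq> U" using open_n_cube[OF U y0] by blast
  have regM: "reg n (cube n y0 d) y0 (\<lambda>y. (M ! k) y j)" if "k \<in> I0" "j \<in> {1..n}" "d \<le> d0" for k j d
  proof -
    have "k < m" using that I0(1) by auto
    then have "reg n U y0 (\<lambda>y. (M ! k) y j)" using smM smooth_reg y0 that(2) by blast
    then show ?thesis using reg_mono d0(2) cube_mono[OF that(3)] by blast
  qed
  have regu: "reg n (cube n y0 d) y0 (\<lambda>y. u y j)" if "j \<in> {1..n}" "d \<le> d0" for j d
  proof -
    have "reg n U y0 (\<lambda>y. u y j)" using sm smooth_reg y0 that(1) by blast
    then show ?thesis using reg_mono d0(2) cube_mono[OF that(2)] by blast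
  qed
  obtain d1 where d1: "d1 > 0" "d1 \<le> d0" "\<forall>y\<in>cube n y0 d1. iindep n (\<lambda>k. (M ! k) y) I0"
    using indep_open[OF fI d0(1), of n y0 "\<lambda>k y j. (M ! k) y j"] regM[OF _ _ order_refl] I0'
    unfolding reg_def by auto
  have sub1: "cube n y0 d1 \<subseteq> U" using d0(2) cube_mono[OF d1(2)] by blast
  have sp: "\<forall>y\<in>cube n y0 d1. ispan n (\<lambda>k. (M ! k) y) I0 (u y)"
  proof
    fix y assume y: "y \<in> cube n y0 d1"
    show "ispan n (\<lambda>k. (M ! k) y) I0 (u y)"
    proof (rule ccontr)
      assume ns: "\<not> ispan n (\<lambda>k. (M ! k) y) I0 (u y)"
      define G where "G = (\<lambda>k. ((M @ [u]) ! k) y)"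
      have eqG: "\<forall>k\<in>I0. G k = (M ! k) y" using I0(1) by (auto simp: G_def nth_append m_def)
      have Gm: "G m = u y" by (simp add: G_def m_def)
      have iG: "iindep n G I0" using d1(3) y iindep_cong[OF eqG] by simp
      have nsG: "\<not> ispan n G I0 (G m)" using ns ispan_cong_F[OF eqG] Gm by simp
      have mI: "m \<notin> I0" using I0(1) by auto
      have "iindep n G (insert m I0)" by (rule iindep_insert[OF iG fI mI nsG])
      then have "card (insert m I0) \<le> rankI n G {..<Suc m}"
        using I0(1) by (intro rankI_ge) auto
      also have "rankI n G {..<Suc m} = rank_n n (dval (M @ [u]) y)"
        unfolding rank_n_rankI length_dval length_append_singleton m_def[symmetric]
        by (rule rankI_cong) (auto simp: G_def dval_nth m_def)
      also have "\<dots> \<le> rank_n n (dval L2 y)"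
        by (rule rank_mono_span) (use L2 setM in \<open>auto simp: set_dval intro!: in_span_dval_mem\<close>)
      also have "\<dots> = r" using cst y sub1 r_def by auto
      finally show False using I0(3) fI mI by simp
    qed
  qed
  obtain d2 c where d2: "d2 > 0" "d2 \<le> d1" and rc: "\<forall>k\<in>I0. reg n (cube n y0 d2) y0 (c k)"
    and ceq: "\<forall>y\<in>cube n y0 d2. \<forall>j\<in>{1..n}. u y j = (\<Sum>k\<in>I0. c k y * (M ! k) y j)"
    using represent[OF fI d1(1), of n y0 "\<lambda>k y j. (M ! k) y j" u] regM[OF _ _ d1(2)] regu[OF _ d1(2)] I0' sp
    by auto
  have lieu: "lie n a u y0 j = (\<Sum>k\<in>I0. (\<Sum>i=1..n. a y0 i * dpart i (c k) y0) * (M ! k) y0 j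
      + c k y0 * lie n a (M ! k) y0 j)" if j: "j \<in> {1..n}" for j
  proof (rule lie_leibniz[OF fI d2(1) ceq _ _ j])
    show "\<forall>k\<in>I0. \<forall>i\<in>{1..n}. pd i (c k) y0" using rc unfolding reg_def by blast
    show "\<forall>k\<in>I0. \<forall>i\<in>{1..n}. \<forall>j\<in>{1..n}. pd i (\<lambda>y. (M ! k) y j) y0"
      using regM[OF _ _ order_refl] unfolding reg_def by blast
  qed
  define T where "T = dval L2 y0 @ [lie n a w y0]"
  have memT: "in_span n T (g y0)" if "g \<in> set L2" for g
    using that by (intro in_span_mem) (auto simp: T_def set_dval)
  have memT2: "in_span n T (lie n a w y0)" by (intro in_span_mem) (simp add: T_def)
  have Mk: "M ! k \<in> set L2 \<and> in_span n T (lie n a (M ! k) y0)" if "k \<in> I0" for k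
  proof -
    have "k < m" using that I0(1) by auto
    then have "M ! k \<in> set L \<or> M ! k = w" using MkM setM by auto
    then show ?thesis
    proof
      assume "M ! k \<in> set L" then show ?thesis using cl L2 memT by auto
    next
      assume "M ! k = w" then show ?thesis using L2 memT2 by auto
    qed
  qed
  have inL: "in_span n T (lie n a u y0)"
  proof -
    have A: "in_span n T (\<lambda>j. \<Sum>k\<in>I0. (\<Sum>i=1..n. a y0 i * dpart i (c k) y0) * (M ! k) y0 j
      + c k y0 * lie n a (M ! k) y0 j)"
    proof (rule in_span_sum[OF fI], intro ballI)
      fix k assume k: "k \<in> I0"
      have A: "in_span n T ((M ! k) y0)" using Mk[OF k] memT by blast
      have B: "in_span n T (lie n a (M ! k) y0)" using Mk[OF k] by blast
      show "in_span n T (\<lambda>j. (\<Sum>i=1..n. a y0 i * dpart i (c k) y0) * (M ! k) y0 j + c k y0 * lie n a (M ! k) y0 j)"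
        by (rule in_span_add[OF in_span_scale[OF A] in_span_scale[OF B]])
    qed
    have E: "\<forall>j\<in>{1..n}. lie n a u y0 j = (\<lambda>j. \<Sum>k\<in>I0. (\<Sum>i=1..n. a y0 i * dpart i (c k) y0) * (M ! k) y0 j
      + c k y0 * lie n a (M ! k) y0 j) j" using lieu by simp
    show ?thesis by (subst in_span_cong[OF E]) (rule A)
  qed
  have "rank_n n (dval L3 y0) \<le> rank_n n T"
  proof (rule rank_mono_span, intro ballI)
    fix v assume "v \<in> set (dval L3 y0)"
    then obtain g where g: "g \<in> set L2 \<union> {lie n a w, lie n a u}" "v = g y0" using L3 by (auto simp: set_dval)
    then show "in_span n T v" using memT memT2 inL by auto
  qed
  also have "\<dots> \<le> rank_n n (dval L2 y0) + 1" unfolding T_def by (rule rank_snoc)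
  finally show ?thesis .
qed

lemma persist:
  assumes U: "open_n n U" and y0: "y0 \<in> U"
    and sm: "\<forall>g\<in>set L \<union> {w, u}. \<forall>j\<in>{1..n}. smooth_on n U (\<lambda>y. g y j)"
    and L2: "set L2 = set L \<union> {w, u}"
    and L3: "set L3 = set L2 \<union> {lie n a w, lie n a u}"
    and cl: "\<forall>g\<in>set L. lie n a g \<in> set L2"
    and cst: "\<forall>y\<in>U. rank_n n (dval L2 y) = rank_n n (dval L2 y0)"
    and hyp: "rank_n n (dval L2 y0) \<le> rank_n n (dval L y0) + 1"
  shows "rank_n n (dval L3 y0) \<le> rank_n n (dval L2 y0) + 1"
proof (cases "in_span n (dval (L @ [w]) y0) (u y0)")
  case True
  then show ?thesis by (rule persist_core[OF U y0 sm L2 L3 cl cst])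
next
  case False
  have r1: "rank_n n (dval (L @ [w]) y0) + 1 \<le> rank_n n (dval (L @ [w]) y0 @ [u y0])"
    by (rule rank_snoc_strict[OF False])
  have r2: "rank_n n (dval (L @ [w]) y0 @ [u y0]) = rank_n n (dval L2 y0)"
    by (rule rank_same_span) (use L2 in \<open>auto simp: set_dval dval_append intro!: in_span_mem\<close>)
  have wL: "in_span n (dval L y0) (w y0)"
  proof (rule ccontr)
    assume "\<not> in_span n (dval L y0) (w y0)"
    then have "rank_n n (dval L y0) + 1 \<le> rank_n n (dval L y0 @ [w y0])" by (rule rank_snoc_strict)
    then show False using r1 r2 hyp by (simp add: dval_def)
  qed
  have cB: "in_span n (dval (L @ [u]) y0) (w y0)"
    by (rule in_span_mono[OF _ wL]) (simp add: dval_append)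
  have sm': "\<forall>g\<in>set L \<union> {u, w}. \<forall>j\<in>{1..n}. smooth_on n U (\<lambda>y. g y j)" using sm by auto
  have L2': "set L2 = set L \<union> {u, w}" using L2 by auto
  have L3': "set L3 = set L2 \<union> {lie n a u, lie n a w}" using L3 by auto
  show ?thesis by (rule persist_core[OF U y0 sm' L2' L3' cl cst cB])
qed



lemma Dseq_mem:
  "g \<in> set (Dseq n a b1 b2 i) \<longleftrightarrow> (\<exists>m<i. g = ad_pow n a m b1 \<or> g = ad_pow n a m b2)"
proof (induction i arbitrary: g)
  case 0 then show ?case by simp
next
  case (Suc i)
  show ?case
  proof (cases "i = 0")
    case True then show ?thesis by auto
  next
    case False
    have "g \<in> set (Dseq n a b1 b2 (Suc i)) \<longleftrightarrow>
        g \<in> set (Dseq n a b1 b2 i) \<or> (\<exists>h\<in>set (Dseq n a b1 b2 i). g = lie n a h)"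
      using False by auto
    also have "\<dots> \<longleftrightarrow> (\<exists>m<Suc i. g = ad_pow n a m b1 \<or> g = ad_pow n a m b2)"
    proof
      assume "g \<in> set (Dseq n a b1 b2 i) \<or> (\<exists>h\<in>set (Dseq n a b1 b2 i). g = lie n a h)"
      then show "\<exists>m<Suc i. g = ad_pow n a m b1 \<or> g = ad_pow n a m b2"
      proof
        assume "g \<in> set (Dseq n a b1 b2 i)"
        then show ?thesis using Suc.IH less_SucI by blast
      next
        assume "\<exists>h\<in>set (Dseq n a b1 b2 i). g = lie n a h"
        then obtain h m where "m < i" "h = ad_pow n a m b1 \<or> h = ad_pow n a m b2" "g = lie n a h"
          using Suc.IH by blast
        then show ?thesis by (intro exI[of _ "Suc m"]) auto
      qed
    next
      assume "\<exists>m<Suc i. g = ad_pow n a m b1 \<or> g = ad_pow n a m b2"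
      then obtain m where m: "m < Suc i" "g = ad_pow n a m b1 \<or> g = ad_pow n a m b2" by blast
      show "g \<in> set (Dseq n a b1 b2 i) \<or> (\<exists>h\<in>set (Dseq n a b1 b2 i). g = lie n a h)"
      proof (cases "m < i")
        case True then show ?thesis using m Suc.IH by blast
      next
        case False
        then have "m = i" using m by simp
        then obtain m' where m': "m = Suc m'" "m' < i" using \<open>i \<noteq> 0\<close> by (cases m) auto
        have "ad_pow n a m' b1 \<in> set (Dseq n a b1 b2 i)" "ad_pow n a m' b2 \<in> set (Dseq n a b1 b2 i)"
          using Suc.IH m'(2) by blast+
        then show ?thesis using m m' by auto
      qed
    qed
    finally show ?thesis .
  qed
qed

declare Dseq.simps(2)[simp del]

lemma Dseq_Suc_set:
  "set (Dseq n a b1 b2 (Suc j)) = set (Dseq n a b1 b2 j) \<union> {ad_pow n a j b1, ad_pow n a j b2}"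
proof (rule set_eqI)
  fix g
  show "g \<in> set (Dseq n a b1 b2 (Suc j)) \<longleftrightarrow> g \<in> set (Dseq n a b1 b2 j) \<union> {ad_pow n a j b1, ad_pow n a j b2}"
    using Dseq_mem[of g n a b1 b2 "Suc j"] Dseq_mem[of g n a b1 b2 j]
    by (auto simp del: Dseq.simps simp: less_Suc_eq)
qed

lemma Dseq_lie_closed: "g \<in> set (Dseq n a b1 b2 j) \<Longrightarrow> lie n a g \<in> set (Dseq n a b1 b2 (Suc j))"
proof -
  assume "g \<in> set (Dseq n a b1 b2 j)"
  then obtain m where m: "m < j" "g = ad_pow n a m b1 \<or> g = ad_pow n a m b2"
    using Dseq_mem[of g n a b1 b2 j] by blast
  then have "Suc m < Suc j" "lie n a g = ad_pow n a (Suc m) b1 \<or> lie n a g = ad_pow n a (Suc m) b2" by auto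
  then show ?thesis using Dseq_mem[of "lie n a g" n a b1 b2 "Suc j"] by blast
qed

lemma Dseq_mono: "j \<le> j' \<Longrightarrow> set (Dseq n a b1 b2 j) \<subseteq> set (Dseq n a b1 b2 j')"
proof
  fix g assume jj: "j \<le> j'" and g: "g \<in> set (Dseq n a b1 b2 j)"
  obtain m where m: "m < j" "g = ad_pow n a m b1 \<or> g = ad_pow n a m b2"
    using Dseq_mem[of g n a b1 b2 j] g by blast
  have "m < j'" using m(1) jj by simp
  then show "g \<in> set (Dseq n a b1 b2 j')"
    using Dseq_mem[of g n a b1 b2 j'] m(2) by blast
qed

lemma R_inc:
  assumes "in_span n (dval (Dseq n a b1 b2 j) y) (ad_pow n a j b2 y)"
  shows "rank_n n (dval (Dseq n a b1 b2 (Suc j)) y) \<le> rank_n n (dval (Dseq n a b1 b2 j) y) + 1"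
proof -
  let ?L = "dval (Dseq n a b1 b2 j) y @ [ad_pow n a j b1 y]"
  have "rank_n n (dval (Dseq n a b1 b2 (Suc j)) y) \<le> rank_n n ?L"
  proof (rule rank_mono_span, intro ballI)
    fix v assume "v \<in> set (dval (Dseq n a b1 b2 (Suc j)) y)"
    then obtain g where g: "g \<in> set (Dseq n a b1 b2 j) \<union> {ad_pow n a j b1, ad_pow n a j b2}" "v = g y"
      by (auto simp: set_dval Dseq_Suc_set)
    show "in_span n ?L v"
    proof (cases "g = ad_pow n a j b2")
      case True then show ?thesis using assms g in_span_mono[of "dval (Dseq n a b1 b2 j) y" ?L] by auto
    next
      case False then show ?thesis using g by (auto intro!: in_span_mem simp: set_dval)
    qed
  qed
  also have "\<dots> \<le> rank_n n (dval (Dseq n a b1 b2 j) y) + 1" by (rule rank_snoc)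
  finally show ?thesis .
qed

lemma smooth_lie:
  assumes U: "open_n n U" and v: "\<forall>j\<in>{1..n}. smooth_on n U (\<lambda>y. v y j)"
    and w: "\<forall>j\<in>{1..n}. smooth_on n U (\<lambda>y. w y j)"
  shows "\<forall>j\<in>{1..n}. smooth_on n U (\<lambda>y. lie n v w y j)"
proof
  fix j assume j: "j \<in> {1..n}"
  have "smooth_on n U (\<lambda>y. \<Sum>i\<in>{1..n}. v y i * dpart i (\<lambda>y. w y j) y - w y i * dpart i (\<lambda>y. v y j) y)"
    by (rule smooth_sum[OF U])
       (use v w j in \<open>auto intro!: smooth_diff[OF U] smooth_mult[OF U] smooth_dpart\<close>)
  then show "smooth_on n U (\<lambda>y. lie n v w y j)" by (simp add: lie_def)
qed

lemma smooth_ad_pow: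
  assumes U: "open_n n U" and a: "\<forall>j\<in>{1..n}. smooth_on n U (\<lambda>y. a y j)"
    and b: "\<forall>j\<in>{1..n}. smooth_on n U (\<lambda>y. b y j)"
  shows "\<forall>j\<in>{1..n}. smooth_on n U (\<lambda>y. ad_pow n a m b y j)"
  by (induction m) (simp_all add: b smooth_lie[OF U a])

section \<open>Support structure\<close>

definition indep_prop :: "nat \<Rightarrow> vfield \<Rightarrow> bool" where
  "indep_prop n V \<longleftrightarrow> (\<forall>j\<in>{1..n}. \<forall>i. j + 1 < i \<longrightarrow> (\<forall>y t. V (y(i := t)) j = V y j))"

definition inE :: "nat \<Rightarrow> nat \<Rightarrow> vfield \<Rightarrow> bool" where
  "inE n q X \<longleftrightarrow> (\<forall>y. \<forall>j\<in>{1..n}. j + q \<le> n \<longrightarrow> X y j = 0)"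

lemma dpart_zero_fun: "(\<forall>y. f y = 0) \<Longrightarrow> dpart i f z = 0"
proof -
  assume "\<forall>y. f y = 0"
  then have "f = (\<lambda>y. 0)" by auto
  then show ?thesis by (simp add: dpart_const)
qed

lemma indep_dpart:
  assumes "indep_prop n V" "j \<in> {1..n}" "j + 1 < i"
  shows "dpart i (\<lambda>y. V y j) z = 0"
  using assms unfolding indep_prop_def by (intro dpart_indep(1)) auto

lemma lie_E:
  assumes V: "indep_prop n V" and X: "inE n q X"
  shows "inE n (Suc q) (lie n V X)"
  unfolding inE_def
proof (intro allI ballI impI)
  fix y j assume j: "j \<in> {1..n}" and jq: "j + Suc q \<le> n"
  have "lie n V X y j = (\<Sum>i=1..n. V y i * dpart i (\<lambda>y. X y j) y - X y i * dpart i (\<lambda>y. V y j) y)"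
    by (simp add: lie_def)
  also have "\<dots> = (\<Sum>i=1..n. 0)"
  proof (rule sum.cong[OF refl])
    fix i assume i: "i \<in> {1..n}"
    have "dpart i (\<lambda>y. X y j) y = 0" using X j jq by (intro dpart_zero_fun) (auto simp: inE_def)
    moreover have "X y i * dpart i (\<lambda>y. V y j) y = 0"
    proof (cases "i + q \<le> n")
      case True then show ?thesis using X i by (simp add: inE_def)
    next
      case False then have "j + 1 < i" using jq by simp
      then show ?thesis using indep_dpart[OF V j] by simp
    qed
    ultimately show "V y i * dpart i (\<lambda>y. X y j) y - X y i * dpart i (\<lambda>y. V y j) y = 0" by simp
  qed
  finally show "lie n V X y j = 0" by simp
qed

lemma lie_E_top:
  assumes V: "indep_prop n V" and X: "inE n q X" and q: "1 \<le> q" "q < n"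
  shows "lie n V X y (n - q) = - X y (n - q + 1) * dpart (n - q + 1) (\<lambda>y. V y (n - q)) y"
proof -
  let ?f = "\<lambda>i. V y i * dpart i (\<lambda>y. X y (n - q)) y - X y i * dpart i (\<lambda>y. V y (n - q)) y"
  have nq: "n - q \<in> {1..n}" using q by auto
  have i0: "n - q + 1 \<in> {1..n}" using q by auto
  have z: "dpart i (\<lambda>y. X y (n - q)) y = 0" for i
    using X nq q by (intro dpart_zero_fun) (auto simp: inE_def)
  have "lie n V X y (n - q) = (\<Sum>i\<in>{1..n}. ?f i)" by (simp add: lie_def)
  also have "\<dots> = ?f (n - q + 1) + (\<Sum>i\<in>{1..n} - {n - q + 1}. ?f i)"
    by (rule sum.remove[OF _ i0]) simp
  also have "(\<Sum>i\<in>{1..n} - {n - q + 1}. ?f i) = 0"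
  proof (rule sum.neutral, intro ballI)
    fix i assume i: "i \<in> {1..n} - {n - q + 1}"
    show "?f i = 0"
    proof (cases "i + q \<le> n")
      case True then show ?thesis using X i z by (simp add: inE_def)
    next
      case False then have "n - q + 1 < i" using i by auto
      then show ?thesis using indep_dpart[OF V nq] z by simp
    qed
  qed
  finally show ?thesis using z by simp
qed

lemma in_span_E:
  assumes x: "\<forall>j\<in>{1..n}. j + q \<le> n \<longrightarrow> x j = 0"
    and E: "\<forall>j\<in>{1..n}. n < j + q \<longrightarrow> in_span n L (coord_vf j y)"
  shows "in_span n L x"
proof -
  let ?S = "{j\<in>{1..n}. n < j + q}"
  have A: "in_span n L (\<lambda>i. \<Sum>j\<in>?S. x j * coord_vf j y i)"
    by (rule in_span_sum) (use E in \<open>auto intro: in_span_scale\<close>)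
  have Eq: "\<forall>i\<in>{1..n}. x i = (\<lambda>i. \<Sum>j\<in>?S. x j * coord_vf j y i) i"
  proof
    fix i assume i: "i \<in> {1..n}"
    have "(\<Sum>j\<in>?S. x j * coord_vf j y i) = (\<Sum>j\<in>?S. if j = i then x i else 0)"
      by (rule sum.cong) (auto simp: coord_vf_def)
    also have "\<dots> = (if i \<in> ?S then x i else 0)" by simp
    also have "\<dots> = x i" using x i by auto
    finally show "x i = (\<lambda>i. \<Sum>j\<in>?S. x j * coord_vf j y i) i" by simp
  qed
  show ?thesis by (subst in_span_cong[OF Eq]) (rule A)
qed

lemma new_coord:
  assumes X: "in_span n L (X y)" and Xs: "\<forall>j\<in>{1..n}. j + q \<le> n \<longrightarrow> j \<noteq> n - q \<longrightarrow> X y j = 0"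
    and t: "X y (n - q) \<noteq> 0"
    and E: "\<forall>j\<in>{1..n}. n < j + q \<longrightarrow> in_span n L (coord_vf j y)"
    and q: "q < n"
  shows "in_span n L (coord_vf (n - q) y)"
proof -
  define t0 where "t0 = X y (n - q)"
  define x where "x = (\<lambda>i. coord_vf (n - q) y i - (1 / t0) * X y i)"
  have "in_span n L x"
  proof (rule in_span_E[OF _ E], intro ballI impI)
    fix j assume j: "j \<in> {1..n}" "j + q \<le> n"
    show "x j = 0"
    proof (cases "j = n - q")
      case True then show ?thesis using t by (simp add: x_def t0_def coord_vf_def)
    next
      case False then show ?thesis using Xs j by (simp add: x_def coord_vf_def)
    qed
  qed
  then have "in_span n L (\<lambda>i. x i + (1 / t0) * X y i)"
    by (rule in_span_add) (rule in_span_scale[OF X])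
  then show ?thesis by (simp add: x_def)
qed



section \<open>GTF specifics\<close>

lemma gtf_a_fun:
  "(\<lambda>y. gtf_a n k1 k2 al y j) = (if 1 \<le> j \<and> j < k1 then (\<lambda>y. y (j + 1))
     else if k1 < j \<and> j < k1 + k2 then (\<lambda>y. y (j + 1))
     else if k1 + k2 \<le> j \<and> j \<le> n - 1 then al j else (\<lambda>y. 0))"
  by (auto simp: gtf_a_def fun_eq_iff)

lemma gtf_b1_fun:
  "(\<lambda>y. gtf_b1 n k1 k2 bl y j) = (if j = k1 then (\<lambda>y. 1)
     else if k1 + k2 \<le> j \<and> j \<le> n - 1 then bl j else (\<lambda>y. 0))"
  by (auto simp: gtf_b1_def fun_eq_iff)

lemma gtf_a_smooth:
  assumes U: "open_n n U" and kn: "k1 + k2 \<le> n"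
    and sm: "\<forall>l\<in>{k1+k2..n-1}. smooth_on n U (al l)"
  shows "\<forall>j\<in>{1..n}. smooth_on n U (\<lambda>y. gtf_a n k1 k2 al y j)"
proof
  fix j assume j: "j \<in> {1..n}"
  show "smooth_on n U (\<lambda>y. gtf_a n k1 k2 al y j)"
    unfolding gtf_a_fun using j kn sm by (auto intro!: smooth_coord[OF U] smooth_const)
qed

lemma gtf_b1_smooth:
  assumes U: "open_n n U"
    and sm: "\<forall>l\<in>{k1+k2..n-1}. smooth_on n U (bl l)"
  shows "\<forall>j\<in>{1..n}. smooth_on n U (\<lambda>y. gtf_b1 n k1 k2 bl y j)"
proof
  fix j assume j: "j \<in> {1..n}"
  show "smooth_on n U (\<lambda>y. gtf_b1 n k1 k2 bl y j)"
    unfolding gtf_b1_fun using j sm by (auto intro!: smooth_const)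
qed

lemma gtf_b2_smooth: "\<forall>j\<in>{1..n}. smooth_on n U (\<lambda>y. gtf_b2 n y j)"
  by (simp add: gtf_b2_def coord_vf_def smooth_const)

lemma gtf_a_indep:
  assumes triang: "\<forall>l\<in>{k1+k2..n-1}. \<forall>z w. (\<forall>j\<in>{1..l+1}. z j = w j) \<longrightarrow>
                    al l z = al l w \<and> bl l z = bl l w"
  shows "indep_prop n (gtf_a n k1 k2 al)"
  unfolding indep_prop_def
proof (intro ballI allI impI)
  fix j i and y :: pt and t :: real assume j: "j \<in> {1..n}" and ji: "j + 1 < i"
  have agree: "\<forall>j'\<in>{1..j+1}. (y(i := t)) j' = y j'" using ji by auto
  have blk: "al j (y(i := t)) = al j y" if "k1 + k2 \<le> j \<and> j \<le> n - 1"
  proof -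
    have "j \<in> {k1+k2..n-1}" using that by simp
    then have "\<forall>z w. (\<forall>j'\<in>{1..j+1}. z j' = w j') \<longrightarrow> al j z = al j w \<and> bl j z = bl j w"
      using triang by blast
    then have "al j (y(i := t)) = al j y \<and> bl j (y(i := t)) = bl j y" using agree by blast
    then show ?thesis by simp
  qed
  have ne: "j + 1 \<noteq> i" using ji by simp
  show "gtf_a n k1 k2 al (y(i := t)) j = gtf_a n k1 k2 al y j"
    unfolding gtf_a_def using blk ne by simp
qed

lemma gtf_b1_indep:
  assumes triang: "\<forall>l\<in>{k1+k2..n-1}. \<forall>z w. (\<forall>j\<in>{1..l+1}. z j = w j) \<longrightarrow>
                    al l z = al l w \<and> bl l z = bl l w"
  shows "indep_prop n (gtf_b1 n k1 k2 bl)"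
  unfolding indep_prop_def
proof (intro ballI allI impI)
  fix j i and y :: pt and t :: real assume j: "j \<in> {1..n}" and ji: "j + 1 < i"
  have agree: "\<forall>j'\<in>{1..j+1}. (y(i := t)) j' = y j'" using ji by auto
  have blk: "bl j (y(i := t)) = bl j y" if "k1 + k2 \<le> j \<and> j \<le> n - 1"
  proof -
    have "j \<in> {k1+k2..n-1}" using that by simp
    then have "\<forall>z w. (\<forall>j'\<in>{1..j+1}. z j' = w j') \<longrightarrow> al j z = al j w \<and> bl j z = bl j w"
      using triang by blast
    then have "al j (y(i := t)) = al j y \<and> bl j (y(i := t)) = bl j y" using agree by blast
    then show ?thesis by simp
  qed
  have ne: "j + 1 \<noteq> i" using ji by simp
  show "gtf_b1 n k1 k2 bl (y(i := t)) j = gtf_b1 n k1 k2 bl y j"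
    unfolding gtf_b1_def using blk ne by simp
qed

lemma gtf_b2_E: "inE n 1 (gtf_b2 n)"
  by (auto simp: inE_def gtf_b2_def coord_vf_def)



theorem lemma2:
  fixes n k1 k2 p :: nat
    and al bl :: "nat \<Rightarrow> pt \<Rightarrow> real"
    and U :: "pt set"
  defines "a \<equiv> gtf_a n k1 k2 al"
      and "b1 \<equiv> gtf_b1 n k1 k2 bl"
      and "b2 \<equiv> gtf_b2 n"
  defines "D \<equiv> Dseq n a b1 b2"
  defines "v1 \<equiv> ad_pow n a (p - 1) b1"
      and "v2 \<equiv> coord_vf (n - (p - 1))"
  assumes k: "1 \<le> k1" "1 \<le> k2" "k1 + k2 \<le> n"
    and U: "open_n n U" "U \<noteq> {}"
    \<comment> \<open>GTF structure: a^l, b^l smooth, depending only on z^1..z^(l+1)\<close>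
    and smooth: "\<forall>l\<in>{k1+k2..n-1}. smooth_on n U (al l) \<and> smooth_on n U (bl l)"
    and triang: "\<forall>l\<in>{k1+k2..n-1}. \<forall>z w. (\<forall>j\<in>{1..l+1}. z j = w j) \<longrightarrow>
                    al l z = al l w \<and> bl l z = bl l w"
    and bnz: "k1 + k2 \<le> n - 1 \<longrightarrow> (\<forall>z\<in>U. bl (k1+k2) z \<noteq> 0)"
    and anz: "\<forall>l\<in>{k1+k2..n-1}. \<forall>z\<in>U.
                 dpart (l+1) (al l) z \<noteq> 0 \<or> dpart (l+1) (bl l) z \<noteq> 0"
    \<comment> \<open>constant rank of the distributions on U\<close>
    and crank: "\<forall>i\<le>p+1. \<forall>z\<in>U. \<forall>z'\<in>U. rank_n n (dval (D i) z) = rank_n n (dval (D i) z')"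
    and p: "1 \<le> p"
    and invol: "\<forall>i\<in>{1..p}. \<forall>z\<in>U. involutive_at n (D i) z"
    and noninvol: "\<forall>z\<in>U. \<not> involutive_at n (D (p+1)) z"
    and corank: "\<forall>z\<in>U. rank_n n (dval (D p) z) = rank_n n (dval (D (p-1)) z) + 2
                       \<and> rank_n n (dval (D (p+1)) z) = rank_n n (dval (D p) z) + 2"
    and notcauchy: "\<forall>V. open_n n V \<and> V \<noteq> {} \<and> V \<subseteq> U \<longrightarrow>
                       \<not> (\<forall>g\<in>set (D p). g \<in> cauchy_char n V (D (p+1)))"
    and adprev: "\<forall>g\<in>set (D (p-1)). in_distr n U (D p) (lie n a g)"
    and nextD: "\<forall>z\<in>U. \<forall>x. in_span n (dval (D (p+1)) z) x \<longleftrightarrow>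
                   in_span n (dval (D p) z @ map (\<lambda>g. lie n a g z) (D p)) x"
  shows "\<forall>z\<in>U.
           (\<forall>x. in_span n (dval (D p) z) x \<longleftrightarrow> in_span n (dval (D (p-1)) z @ [v1 z, v2 z]) x)
         \<and> ((0::real), (1::real)) \<noteq> (0, 0)
         \<and> in_span n (dval (D (p+1)) z) (quad_expr n a v1 v2 0 1 z)
         \<and> (\<lambda>j. 0 * v1 z j + 1 * v2 z j) = coord_vf (n - (p - 1)) z
         \<and> in_span n (dval (D p) z) (\<lambda>j. 0 * v1 z j + 1 * v2 z j)
         \<and> \<not> in_span n (dval (D (p-1)) z) (\<lambda>j. 0 * v1 z j + 1 * v2 z j)"
proof -
  have Uo: "open_n n U" and Une: "U \<noteq> {}" using U by auto
  have k1: "1 \<le> k1" and k2: "1 \<le> k2" and kn: "k1 + k2 \<le> n" using k by auto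
  have sa: "\<forall>j\<in>{1..n}. smooth_on n U (\<lambda>y. a y j)"
    unfolding a_def by (rule gtf_a_smooth[OF Uo kn]) (use smooth in blast)
  have sb1: "\<forall>j\<in>{1..n}. smooth_on n U (\<lambda>y. b1 y j)"
    unfolding b1_def by (rule gtf_b1_smooth[OF Uo]) (use smooth in blast)
  have sb2: "\<forall>j\<in>{1..n}. smooth_on n U (\<lambda>y. b2 y j)"
    unfolding b2_def by (rule gtf_b2_smooth)
  have sad1: "\<forall>j\<in>{1..n}. smooth_on n U (\<lambda>y. ad_pow n a m b1 y j)" for m
    by (rule smooth_ad_pow[OF Uo sa sb1])
  have sad2: "\<forall>j\<in>{1..n}. smooth_on n U (\<lambda>y. ad_pow n a m b2 y j)" for m
    by (rule smooth_ad_pow[OF Uo sa sb2])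
  have aind: "indep_prop n a" unfolding a_def by (rule gtf_a_indep[OF triang])
  have b1ind: "indep_prop n b1" unfolding b1_def by (rule gtf_b1_indep[OF triang])
  have E2: "inE n (Suc m) (ad_pow n a m b2)" for m
  proof (induction m)
    case 0 then show ?case using gtf_b2_E by (simp add: b2_def)
  next
    case (Suc m) then show ?case using lie_E[OF aind] by simp
  qed
  define t where "t = (\<lambda>m y. ad_pow n a m b2 y (n - m))"
  have t0: "t 0 y = 1" for y by (simp add: t_def b2_def gtf_b2_def coord_vf_def)
  have tS: "t (Suc m) y = - t m y * dpart (n - m) (\<lambda>y. a y (n - Suc m)) y" if "Suc m < n" for m y
  proof -
    have "lie n a (ad_pow n a m b2) y (n - Suc m) =
      - ad_pow n a m b2 y (n - Suc m + 1) * dpart (n - Suc m + 1) (\<lambda>y. a y (n - Suc m)) y"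
      by (rule lie_E_top[OF aind E2]) (use that in auto)
    moreover have "n - Suc m + 1 = n - m" using that by simp
    ultimately show ?thesis by (simp add: t_def)
  qed
  have DS: "set (D (Suc j)) = set (D j) \<union> {ad_pow n a j b1, ad_pow n a j b2}" for j
    unfolding D_def by (rule Dseq_Suc_set)
  have Dmem: "g \<in> set (D i) \<longleftrightarrow> (\<exists>m<i. g = ad_pow n a m b1 \<or> g = ad_pow n a m b2)" for g i
    unfolding D_def by (rule Dseq_mem)
  have Dmono: "j \<le> j' \<Longrightarrow> set (D j) \<subseteq> set (D j')" for j j'
    unfolding D_def by (rule Dseq_mono)
  have smD: "\<forall>g\<in>set (D i). \<forall>j\<in>{1..n}. smooth_on n U (\<lambda>y. g y j)" for i
  proof (intro ballI)
    fix g j assume g: "g \<in> set (D i)" and j: "j \<in> {1..n}"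
    obtain m where "g = ad_pow n a m b1 \<or> g = ad_pow n a m b2" using g Dmem by blast
    then show "smooth_on n U (\<lambda>y. g y j)" using sad1[of m] sad2[of m] j by auto
  qed
  have Rinc: "in_span n (dval (D j) y) (ad_pow n a j b2 y) \<Longrightarrow>
      rank_n n (dval (D (Suc j)) y) \<le> rank_n n (dval (D j) y) + 1" for j y
    unfolding D_def by (rule R_inc)
  have spmono: "j \<le> j' \<Longrightarrow> in_span n (dval (D j) y) x \<Longrightarrow> in_span n (dval (D j') y) x" for j j' y x
    by (rule in_span_mono[of "dval (D j) y"]) (use Dmono in \<open>auto simp: set_dval\<close>)
  have EinD: "\<forall>j\<in>{1..n}. n < j + q \<longrightarrow> in_span n (dval (D q) y) (coord_vf j y)"
    if "q \<le> n" "\<forall>m<q. t m y \<noteq> 0" for q y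
    using that
  proof (induction q)
    case 0 then show ?case by auto
  next
    case (Suc q)
    have IH: "\<forall>j\<in>{1..n}. n < j + q \<longrightarrow> in_span n (dval (D (Suc q)) y) (coord_vf j y)"
      using Suc.IH Suc.prems spmono[of q "Suc q"] by auto
    have new: "in_span n (dval (D (Suc q)) y) (coord_vf (n - q) y)"
    proof (rule new_coord[of n _ "ad_pow n a q b2" y q])
      show "in_span n (dval (D (Suc q)) y) (ad_pow n a q b2 y)"
        by (rule in_span_dval_mem) (simp add: DS)
      show "\<forall>j\<in>{1..n}. j + q \<le> n \<longrightarrow> j \<noteq> n - q \<longrightarrow> ad_pow n a q b2 y j = 0"
        using E2[of q] unfolding inE_def by auto
      show "ad_pow n a q b2 y (n - q) \<noteq> 0" using Suc.prems by (simp add: t_def)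
      show "\<forall>j\<in>{1..n}. n < j + q \<longrightarrow> in_span n (dval (D (Suc q)) y) (coord_vf j y)" by (rule IH)
      show "q < n" using Suc.prems by simp
    qed
    show ?case
    proof (intro ballI impI)
      fix j assume j: "j \<in> {1..n}" "n < j + Suc q"
      show "in_span n (dval (D (Suc q)) y) (coord_vf j y)"
      proof (cases "n < j + q")
        case True then show ?thesis using IH j by blast
      next
        case False then have "j = n - q" using j by simp
        then show ?thesis using new by simp
      qed
    qed
  qed
  obtain z0 where z0: "z0 \<in> U" using Une by blast
  have cor: "rank_n n (dval (D (p+1)) z) = rank_n n (dval (D p) z) + 2"
            "rank_n n (dval (D p) z) = rank_n n (dval (D (p-1)) z) + 2" if "z \<in> U" for z
    using corank that by auto
  have Dp: "D p = D (Suc (p - 1))" using p by simp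
  text \<open>Persistence of a rank deficiency up to step p.\<close>
  have chain: False if j0: "j0 \<le> p" and def0: "\<forall>y\<in>U. rank_n n (dval (D (Suc j0)) y) \<le> rank_n n (dval (D j0) y) + 1" for j0
  proof -
    have "\<forall>y\<in>U. rank_n n (dval (D (Suc j)) y) \<le> rank_n n (dval (D j) y) + 1" if "j0 \<le> j" "j \<le> p" for j
      using that
    proof (induction j)
      case 0 then show ?case using def0 by simp
    next
      case (Suc j)
      show ?case
      proof (cases "j0 = Suc j")
        case True then show ?thesis using def0 by simp
      next
        case False
        then have IHj: "\<forall>y\<in>U. rank_n n (dval (D (Suc j)) y) \<le> rank_n n (dval (D j) y) + 1"
          using Suc by simp
        show ?thesis
        proof
          fix y0 assume y0: "y0 \<in> U"
          show "rank_n n (dval (D (Suc (Suc j))) y0) \<le> rank_n n (dval (D (Suc j)) y0) + 1"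
          proof (rule persist[OF Uo y0, of "D j" "ad_pow n a j b1" "ad_pow n a j b2"])
            show "\<forall>g\<in>set (D j) \<union> {ad_pow n a j b1, ad_pow n a j b2}. \<forall>i\<in>{1..n}. smooth_on n U (\<lambda>y. g y i)"
              using smD[of j] sad1 sad2 by blast
            show "set (D (Suc j)) = set (D j) \<union> {ad_pow n a j b1, ad_pow n a j b2}" by (rule DS)
            show "set (D (Suc (Suc j))) = set (D (Suc j)) \<union> {lie n a (ad_pow n a j b1), lie n a (ad_pow n a j b2)}"
              using DS[of "Suc j"] by simp
            show "\<forall>g\<in>set (D j). lie n a g \<in> set (D (Suc j))"
            proof
              fix g assume "g \<in> set (D j)"
              then show "lie n a g \<in> set (D (Suc j))" unfolding D_def by (rule Dseq_lie_closed)
            qed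
            have Sj: "Suc j \<le> p + 1" using Suc.prems by simp
            show "\<forall>y\<in>U. rank_n n (dval (D (Suc j)) y) = rank_n n (dval (D (Suc j)) y0)"
            proof
              fix y assume y: "y \<in> U"
              show "rank_n n (dval (D (Suc j)) y) = rank_n n (dval (D (Suc j)) y0)"
                using crank Sj y y0 by blast
            qed
            show "rank_n n (dval (D (Suc j)) y0) \<le> rank_n n (dval (D j) y0) + 1" using IHj y0 by blast
          qed
        qed
      qed
    qed
    then have "rank_n n (dval (D (Suc p)) z0) \<le> rank_n n (dval (D p) z0) + 1" using j0 z0 by blast
    then show False using cor(1)[OF z0] by simp
  qed
  text \<open>Main induction: the chain of the second input does not degenerate before step p.\<close>
  have key: "\<forall>q'\<le>q. k1 < n - q' \<and> (\<forall>y\<in>U. t q' y \<noteq> 0)" if "q \<le> p" for q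
    using that
  proof (induction q)
    case 0 then show ?case using t0 kn k2 by auto
  next
    case (Suc q)
    have IH: "\<forall>q'\<le>q. k1 < n - q' \<and> (\<forall>y\<in>U. t q' y \<noteq> 0)" using Suc by simp
    have nq: "k1 < n - q" using IH by blast
    have tnz: "\<forall>m<Suc q. \<forall>y\<in>U. t m y \<noteq> 0" using IH by auto
    define l where "l = n - Suc q"
    have lk: "k1 \<le> l" and l1: "l + 1 = n - q" and Sqn: "Suc q < n" using nq k1 by (auto simp: l_def)
    have tSq: "t (Suc q) y = - t q y * dpart (l + 1) (\<lambda>y. a y l) y" for y
      using tS[OF Sqn] l1 by (simp add: l_def)
    have EDq: "\<forall>j\<in>{1..n}. n < j + Suc q \<longrightarrow> in_span n (dval (D (Suc q)) y) (coord_vf j y)" if "y \<in> U" for y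
      using EinD[of "Suc q" y] Sqn tnz that by auto
    have new: "k1 < l \<and> (\<forall>y\<in>U. t (Suc q) y \<noteq> 0)"
    proof (cases "l = k1")
      case True
      have azero: "(\<lambda>y. a y l) = (\<lambda>y. 0)" using True k2 by (auto simp: a_def gtf_a_def)
      have tz: "t (Suc q) y = 0" for y using tSq[of y] azero by (simp add: dpart_const)
      have inv: "inE n (Suc q) (ad_pow n a m b2)" if "Suc q \<le> m" for m
        using that
      proof (induction m)
        case 0 then show ?case by simp
      next
        case (Suc m)
        show ?case
        proof (cases "Suc q = Suc m")
          case True
          show ?thesis unfolding inE_def
          proof (intro allI ballI impI)
            fix y j assume j: "j \<in> {1..n}" "j + Suc q \<le> n"
            show "ad_pow n a (Suc m) b2 y j = 0"
            proof (cases "j = l")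
              case True then show ?thesis using tz[of y] \<open>Suc q = Suc m\<close> by (simp add: t_def l_def)
            next
              case False then show ?thesis using E2[of "Suc m"] j \<open>Suc q = Suc m\<close> by (auto simp: inE_def l_def)
            qed
          qed
        next
          case False
          then have X: "inE n (Suc q) (ad_pow n a m b2)" using Suc by simp
          show ?thesis unfolding inE_def
          proof (intro allI ballI impI)
            fix y j assume j: "j \<in> {1..n}" "j + Suc q \<le> n"
            show "ad_pow n a (Suc m) b2 y j = 0"
            proof (cases "j = l")
              case True
              have "lie n a (ad_pow n a m b2) y (n - Suc q) =
                - ad_pow n a m b2 y (n - Suc q + 1) * dpart (n - Suc q + 1) (\<lambda>y. a y (n - Suc q)) y"
                by (rule lie_E_top[OF aind X]) (use Sqn in auto)
              then show ?thesis using True azero by (simp add: l_def dpart_const)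
            next
              case False
              then have "j + Suc (Suc q) \<le> n" using j by (simp add: l_def)
              then show ?thesis using lie_E[OF aind X] j by (simp add: inE_def)
            qed
          qed
        qed
      qed
      have "in_span n (dval (D p) z0) (ad_pow n a p b2 z0)"
      proof (rule in_span_E[of n "Suc q"])
        show "\<forall>j\<in>{1..n}. j + Suc q \<le> n \<longrightarrow> ad_pow n a p b2 z0 j = 0"
          using inv[of p] Suc.prems unfolding inE_def by auto
        show "\<forall>j\<in>{1..n}. n < j + Suc q \<longrightarrow> in_span n (dval (D p) z0) (coord_vf j z0)"
          using EDq[OF z0] spmono[OF Suc.prems] by blast
      qed
      then have "rank_n n (dval (D (Suc p)) z0) \<le> rank_n n (dval (D p) z0) + 1" by (rule Rinc)
      then have False using cor(1)[OF z0] by simp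
      then show ?thesis by blast
    next
      case False
      then have lk': "k1 < l" using lk by simp
      show ?thesis
      proof (cases "l < k1 + k2")
        case True
        have "(\<lambda>y. a y l) = (\<lambda>y. y (l + 1))" using True lk' by (auto simp: a_def gtf_a_def)
        then have "t (Suc q) y = - t q y" for y using tSq[of y] by (simp add: dpart_coord)
        then show ?thesis using lk' tnz by auto
      next
        case False
        then have blk: "l \<in> {k1+k2..n-1}" using Sqn by (auto simp: l_def)
        have afun: "(\<lambda>y. a y l) = al l" using blk k2 by (auto simp: a_def gtf_a_def)
        have bfun: "(\<lambda>y. b1 y l) = bl l" using blk k2 by (auto simp: b1_def gtf_b1_def)
        have "\<forall>y\<in>U. t (Suc q) y \<noteq> 0"
        proof (rule ccontr)
          assume "\<not> (\<forall>y\<in>U. t (Suc q) y \<noteq> 0)"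
          then obtain z where z: "z \<in> U" "t (Suc q) z = 0" by blast
          have tq: "t q z \<noteq> 0" using tnz z by blast
          have da: "dpart (l + 1) (al l) z = 0" using z tSq[of z] tq afun by simp
          have db: "dpart (l + 1) (bl l) z \<noteq> 0" using anz blk z(1) da by blast
          have Xq: "inE n (Suc q) (ad_pow n a q b2)" by (rule E2)
          have "ad_pow n a q b2 \<in> set (D (Suc q))" "b1 \<in> set (D (Suc q))"
            using Dmem[of _ "Suc q"] by auto
          then have inv1: "in_span n (dval (D (Suc q)) z) (lie n b1 (ad_pow n a q b2) z)"
            using invol Suc.prems z(1) unfolding involutive_at_def by auto
          have top: "lie n b1 (ad_pow n a q b2) z l = - t q z * dpart (l + 1) (bl l) z"
          proof -
            have "lie n b1 (ad_pow n a q b2) z (n - Suc q) =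
              - ad_pow n a q b2 z (n - Suc q + 1) * dpart (n - Suc q + 1) (\<lambda>y. b1 y (n - Suc q)) z"
              by (rule lie_E_top[OF b1ind Xq]) (use Sqn in auto)
            then show ?thesis using bfun l1 by (simp add: l_def t_def)
          qed
          have el: "in_span n (dval (D (Suc q)) z) (coord_vf l z)"
          proof (rule new_coord[of n _ "lie n b1 (ad_pow n a q b2)" z "Suc q", folded l_def])
            show "in_span n (dval (D (Suc q)) z) (lie n b1 (ad_pow n a q b2) z)" by (rule inv1)
            show "\<forall>j\<in>{1..n}. j + Suc q \<le> n \<longrightarrow> j \<noteq> l \<longrightarrow> lie n b1 (ad_pow n a q b2) z j = 0"
              using lie_E[OF b1ind Xq] unfolding inE_def l_def by auto
            show "lie n b1 (ad_pow n a q b2) z l \<noteq> 0" using top tq db by simp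
            show "\<forall>j\<in>{1..n}. n < j + Suc q \<longrightarrow> in_span n (dval (D (Suc q)) z) (coord_vf j z)"
              by (rule EDq[OF z(1)])
            show "Suc q < n" by (rule Sqn)
          qed
          have "in_span n (dval (D (Suc q)) z) (ad_pow n a (Suc q) b2 z)"
          proof (rule in_span_E[of n "Suc (Suc q)"])
            show "\<forall>j\<in>{1..n}. j + Suc (Suc q) \<le> n \<longrightarrow> ad_pow n a (Suc q) b2 z j = 0"
              using E2[of "Suc q"] unfolding inE_def by blast
            show "\<forall>j\<in>{1..n}. n < j + Suc (Suc q) \<longrightarrow> in_span n (dval (D (Suc q)) z) (coord_vf j z)"
            proof (intro ballI impI)
              fix j assume j: "j \<in> {1..n}" "n < j + Suc (Suc q)"
              show "in_span n (dval (D (Suc q)) z) (coord_vf j z)"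
              proof (cases "n < j + Suc q")
                case True then show ?thesis using EDq[OF z(1)] j by blast
              next
                case False then have "j = l" using j by (simp add: l_def)
                then show ?thesis using el by simp
              qed
            qed
          qed
          then have dz: "rank_n n (dval (D (Suc (Suc q))) z) \<le> rank_n n (dval (D (Suc q)) z) + 1"
            by (rule Rinc)
          have "\<forall>y\<in>U. rank_n n (dval (D (Suc (Suc q))) y) \<le> rank_n n (dval (D (Suc q)) y) + 1"
          proof
            fix y assume y: "y \<in> U"
            have SS: "Suc (Suc q) \<le> p + 1" "Suc q \<le> p + 1" using Suc.prems by simp_all
            have "rank_n n (dval (D (Suc (Suc q))) y) = rank_n n (dval (D (Suc (Suc q))) z)"
              using crank SS(1) y z(1) by blast
            moreover have "rank_n n (dval (D (Suc q)) y) = rank_n n (dval (D (Suc q)) z)"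
              using crank SS(2) y z(1) by blast
            ultimately
            show "rank_n n (dval (D (Suc (Suc q))) y) \<le> rank_n n (dval (D (Suc q)) y) + 1"
              using dz by simp
          qed
          then show False using chain[of "Suc q"] Suc.prems by blast
        qed
        then show ?thesis using lk' by blast
      qed
    qed
    show ?case
    proof (intro allI impI)
      fix q' assume "q' \<le> Suc q"
      then show "k1 < n - q' \<and> (\<forall>y\<in>U. t q' y \<noteq> 0)"
        using IH new by (cases "q' = Suc q") (auto simp: l_def)
    qed
  qed
  have keyp: "\<forall>q'\<le>p. k1 < n - q' \<and> (\<forall>y\<in>U. t q' y \<noteq> 0)" using key by blast
  have pn: "p < n" using keyp by auto
  define m where "m = n - (p - 1)"
  have mn: "m \<in> {1..n}" using pn p by (auto simp: m_def)
  have v2m: "v2 = coord_vf m" by (simp add: v2_def m_def)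
  show ?thesis
  proof (intro ballI)
    fix z assume z: "z \<in> U"
    have tz: "\<forall>q<r. t q z \<noteq> 0" if "r \<le> Suc p" for r using keyp z that by auto
    have E1: "\<forall>j\<in>{1..n}. n < j + (p + 1) \<longrightarrow> in_span n (dval (D (p + 1)) z) (coord_vf j z)"
      using EinD[of "p + 1" z] pn tz[of "p + 1"] by auto
    have E0: "\<forall>j\<in>{1..n}. n < j + p \<longrightarrow> in_span n (dval (D p) z) (coord_vf j z)"
      using EinD[of p z] pn tz[of p] by auto
    have Em: "\<forall>j\<in>{1..n}. n < j + (p - 1) \<longrightarrow> in_span n (dval (D (p - 1)) z) (coord_vf j z)"
      using EinD[of "p - 1" z] pn tz[of "p - 1"] by auto
    have c5: "in_span n (dval (D p) z) (coord_vf m z)" using E0 mn p by (auto simp: m_def)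
    have Xp: "inE n p (ad_pow n a (p - 1) b2)" using E2[of "p - 1"] p by simp
    have c6: "\<not> in_span n (dval (D (p - 1)) z) (coord_vf m z)"
    proof
      assume H: "in_span n (dval (D (p - 1)) z) (coord_vf m z)"
      have "in_span n (dval (D (p - 1)) z) (ad_pow n a (p - 1) b2 z)"
      proof (rule in_span_E[of n p])
        show "\<forall>j\<in>{1..n}. j + p \<le> n \<longrightarrow> ad_pow n a (p - 1) b2 z j = 0" using Xp unfolding inE_def by blast
        show "\<forall>j\<in>{1..n}. n < j + p \<longrightarrow> in_span n (dval (D (p - 1)) z) (coord_vf j z)"
        proof (intro ballI impI)
          fix j assume j: "j \<in> {1..n}" "n < j + p"
          show "in_span n (dval (D (p - 1)) z) (coord_vf j z)"
          proof (cases "j = m")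
            case True then show ?thesis using H by simp
          next
            case False then have "n < j + (p - 1)" using j p by (auto simp: m_def)
            then show ?thesis using Em j by blast
          qed
        qed
      qed
      then have "rank_n n (dval (D (Suc (p - 1))) z) \<le> rank_n n (dval (D (p - 1)) z) + 1" by (rule Rinc)
      then show False using cor(2)[OF z] Dp by simp
    qed
    have c1: "\<forall>x. in_span n (dval (D p) z) x \<longleftrightarrow> in_span n (dval (D (p - 1)) z @ [v1 z, v2 z]) x"
    proof (intro allI iffI)
      fix x assume "in_span n (dval (D p) z) x"
      then show "in_span n (dval (D (p - 1)) z @ [v1 z, v2 z]) x"
      proof (rule in_span_trans, intro ballI)
        let ?L = "dval (D (p - 1)) z @ [v1 z, v2 z]"
        fix v assume "v \<in> set (dval (D p) z)"
        then obtain g where g: "g \<in> set (D (p - 1)) \<union> {ad_pow n a (p - 1) b1, ad_pow n a (p - 1) b2}" "v = g z"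
          using DS[of "p - 1"] Dp by (auto simp: set_dval)
        have EL: "\<forall>j\<in>{1..n}. n < j + p \<longrightarrow> in_span n ?L (coord_vf j z)"
        proof (intro ballI impI)
          fix j assume j: "j \<in> {1..n}" "n < j + p"
          show "in_span n ?L (coord_vf j z)"
          proof (cases "j = m")
            case True then show ?thesis using v2m by (intro in_span_mem) simp
          next
            case False then have "n < j + (p - 1)" using j p by (auto simp: m_def)
            then have "in_span n (dval (D (p - 1)) z) (coord_vf j z)" using Em j by blast
            then show ?thesis by (rule in_span_mono[rotated]) auto
          qed
        qed
        show "in_span n ?L v"
        proof (cases "g = ad_pow n a (p - 1) b2")
          case True
          show ?thesis unfolding g(2) True
            by (rule in_span_E[OF _ EL]) (use Xp in \<open>auto simp: inE_def\<close>)
        next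
          case False
          then have "g \<in> set (D (p - 1)) \<or> g = v1" using g(1) by (auto simp: v1_def)
          then show ?thesis using g(2) by (auto intro!: in_span_mem simp: set_dval)
        qed
      qed
    next
      fix x assume "in_span n (dval (D (p - 1)) z @ [v1 z, v2 z]) x"
      then show "in_span n (dval (D p) z) x"
      proof (rule in_span_trans, intro ballI)
        fix v assume v: "v \<in> set (dval (D (p - 1)) z @ [v1 z, v2 z])"
        show "in_span n (dval (D p) z) v"
        proof -
          have "v \<in> set (dval (D (p - 1)) z) \<or> v = v1 z \<or> v = v2 z" using v by auto
          moreover have "in_span n (dval (D p) z) (v1 z)"
            by (rule in_span_dval_mem) (use DS[of "p - 1"] Dp in \<open>simp add: v1_def\<close>)
          moreover have "in_span n (dval (D p) z) (v2 z)" using c5 v2m by simp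
          moreover have "v \<in> set (dval (D (p - 1)) z) \<Longrightarrow> in_span n (dval (D p) z) v"
            using spmono[of "p - 1" p z v] in_span_mem by auto
          ultimately show ?thesis by blast
        qed
      qed
    qed
    have c3: "in_span n (dval (D (p + 1)) z) (quad_expr n a v1 v2 0 1 z)"
    proof -
      have lv: "lie n (coord_vf m) V y j = dpart m (\<lambda>y. V y j) y" for V y j
      proof -
        have "lie n (coord_vf m) V y j = (\<Sum>i\<in>{1..n}. (if i = m then dpart i (\<lambda>y. V y j) y else 0))"
          unfolding lie_def coord_vf_def by (rule sum.cong) (auto simp: dpart_const)
        also have "\<dots> = dpart m (\<lambda>y. V y j) y" using mn by simp
        finally show ?thesis .
      qed
      have X0: "lie n v2 a y j = 0" if "j \<in> {1..n}" "j + 1 < m" for y j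
        unfolding v2m lv using indep_dpart[OF aind that] .
      have Y0: "lie n v2 (lie n v2 a) z j = 0" if "j \<in> {1..n}" "j + (p + 1) \<le> n" for j
      proof -
        have "j + 1 < m" using that pn p by (auto simp: m_def)
        then have "\<forall>y. lie n v2 a y j = 0" using X0 that(1) by blast
        then show ?thesis unfolding v2m lv by (rule dpart_zero_fun)
      qed
      have "in_span n (dval (D (p + 1)) z) (lie n v2 (lie n v2 a) z)"
        by (rule in_span_E[OF _ E1]) (use Y0 in blast)
      moreover have "\<forall>j\<in>{1..n}. quad_expr n a v1 v2 0 1 z j = lie n v2 (lie n v2 a) z j"
        by (simp add: quad_expr_def)
      ultimately show ?thesis by (subst in_span_cong) auto
    qed
    have c4: "(\<lambda>j. 0 * v1 z j + 1 * v2 z j) = coord_vf (n - (p - 1)) z"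
      by (simp add: v2_def)
    show "(\<forall>x. in_span n (dval (D p) z) x \<longleftrightarrow> in_span n (dval (D (p - 1)) z @ [v1 z, v2 z]) x)
         \<and> ((0::real), (1::real)) \<noteq> (0, 0)
         \<and> in_span n (dval (D (p + 1)) z) (quad_expr n a v1 v2 0 1 z)
         \<and> (\<lambda>j. 0 * v1 z j + 1 * v2 z j) = coord_vf (n - (p - 1)) z
         \<and> in_span n (dval (D p) z) (\<lambda>j. 0 * v1 z j + 1 * v2 z j)
         \<and> \<not> in_span n (dval (D (p - 1)) z) (\<lambda>j. 0 * v1 z j + 1 * v2 z j)"
      using c1 c3 c4 c5 c6 by (simp add: m_def)
  qed
qed

end
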